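(* Let $\mathcal{X}$ be a right coideal of $\mathcal{U}$, $\mu\in\mathbb{C}^\times$, and let $0\ne X\in\mathcal{X}\cap[\mathcal{U}]_\mu$. Write uniquely $X=\sum_{t=0}^{N}X_tG^{(t)}$ with $N=\partial_4(X)$, each $X_t\in\mathrm{Lin}\{F^{(i)}f_\mu E^{(j)}:i,j\in\mathbb{N}_0\}$ and $X_N\ne0$. For $0\le t\le N$ let $s_{13}(t)=\max\{\partial_{13}(X_m): m\ge t,\ X_m\ne0\}$. Then $$\dim\mathcal{X}\ \ge\ \sum_{t=0}^{N}\big(s_{13}(t)+1\big).$$
   Context: Let $q\in\mathbb{C}$ be transcendental. $\mathcal{U}$ is the unital algebra generated by $E,F,G,f_\mu$ ($\mu\in\mathbb{C}^\times$) with relations $f_\mu f_\nu=f_{\mu\nu}$, $f_\mu E=\mu^2Ef_\mu$, $f_\mu F=\mu^{-2}Ff_\mu$, $f_\mu G=Gf_\mu$, $GE=E(G+2)$, $GF=F(G-2)$, $EF-FE=(f_q-f_{q^{-1}})/(q-q^{-1})$, $f_1=1$; $K=f_{q^{1/2}}$ for a fixed square root; Hopf structure $\Delta E=E\otimes K+K^{-1}\otimes E$, $\Delta F=F\otimes K+K^{-1}\otimes F$, $\Delta G=1\otimes G+G\otimes1$, $\Delta f_\mu=f_\mu\otimes f_\mu$. With $[k]=(q^k-q^{-k})/(q-q^{-1})$, $F^{(k)}=F^kK^{-k}/[k]!$, $E^{(k)}=K^{-k}E^k/[k]!$, $G^{(k)}=G^k/k!$, the elements $F^{(i)}f_\mu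 E^{(j)}G^{(k)}$ form a basis of $\mathcal{U}$; $[\mathcal{U}]_\mu=\mathrm{Lin}\{F^{(i)}f_\mu E^{(j)}G^{(k)}:i,j,k\in\mathbb{N}_0\}$. For a basis element $Y=F^{(i)}f_\mu E^{(j)}G^{(k)}$ put $\partial_{13}(Y)=i+j$, $\partial_4(Y)=k$, and for a finite linear combination of basis elements with nonzero coefficients take the maximum over the occurring basis elements. A right coideal is a subspace $\mathcal{X}$ with $\Delta(\mathcal{X})\subset\mathcal{X}\otimes\mathcal{U}$. *)

theory Defs
  imports Complex_Main "HOL-Library.Function_Algebras" "HOL-Computational_Algebra.Polynomial"
begin

text \<open>Concrete model of the underlying vector space of U: a basis element
  F^(i) f_mu E^(j) G^(k) is indexed by (i, mu, j, k) with mu nonzero; elements of U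
  are finitely supported coefficient functions on such indices.
  The multiplication of U is a parameter m, constrained by hypotheses
  (bilinear, associative, unital, defining relations, PBW identification of the basis),
  which determine it uniquely.\<close>

type_synonym idx = "nat \<times> complex \<times> nat \<times> nat"
type_synonym U = "idx \<Rightarrow> complex"
type_synonym UU = "idx \<times> idx \<Rightarrow> complex"

definition supp :: "('a \<Rightarrow> complex) \<Rightarrow> 'a set" where
  "supp f = {b. f b \<noteq> 0}"

definition sc :: "complex \<Rightarrow> ('a \<Rightarrow> complex) \<Rightarrow> ('a \<Rightarrow> complex)" where
  "sc c f = (\<lambda>x. c * f x)"

definition valid_idx :: "idx \<Rightarrow> bool" where
  "valid_idx b \<longleftrightarrow> fst (snd b) \<noteq> 0"

definition Uvec :: "U set" where
  "Uvec = {x. finite (supp x) \<and> (\<forall>b\<in>supp x. valid_idx b)}"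

definition UUvec :: "UU set" where
  "UUvec = {z. finite (supp z) \<and> (\<forall>p\<in>supp z. valid_idx (fst p) \<and> valid_idx (snd p))}"

definition bas :: "idx \<Rightarrow> U" where
  "bas b = (\<lambda>c. if c = b then 1 else 0)"

definition tensor :: "U \<Rightarrow> U \<Rightarrow> UU" where
  "tensor x y = (\<lambda>p. x (fst p) * y (snd p))"

definition lin :: "('a \<Rightarrow> complex) set \<Rightarrow> ('a \<Rightarrow> complex) set" where
  "lin S = {y. \<exists>A c. finite A \<and> A \<subseteq> S \<and> y = (\<Sum>a\<in>A. sc (c a) a)}"

definition lin_indep :: "('a \<Rightarrow> complex) set \<Rightarrow> bool" where
  "lin_indep B \<longleftrightarrow> finite B \<and>
     (\<forall>c. (\<Sum>b\<in>B. sc (c b) b) = 0 \<longrightarrow> (\<forall>b\<in>B. c b = 0))"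

definition subspace_U :: "U set \<Rightarrow> bool" where
  "subspace_U X \<longleftrightarrow> X \<subseteq> Uvec \<and> 0 \<in> X \<and> (\<forall>x\<in>X. \<forall>y\<in>X. x + y \<in> X)
     \<and> (\<forall>c. \<forall>x\<in>X. sc c x \<in> X)"

definition mt :: "(U \<Rightarrow> U \<Rightarrow> U) \<Rightarrow> UU \<Rightarrow> UU \<Rightarrow> UU" where
  "mt m z w = (\<Sum>p\<in>supp z. \<Sum>r\<in>supp w.
      sc (z p * w r) (tensor (m (bas (fst p)) (bas (fst r))) (m (bas (snd p)) (bas (snd r)))))"

definition pow :: "('a \<Rightarrow> 'a \<Rightarrow> 'a) \<Rightarrow> 'a \<Rightarrow> 'a \<Rightarrow> nat \<Rightarrow> 'a" where
  "pow mul one x n = ((mul x) ^^ n) one"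

definition qint :: "complex \<Rightarrow> nat \<Rightarrow> complex" where
  "qint q k = (q ^ k - inverse q ^ k) / (q - inverse q)"

definition qfact :: "complex \<Rightarrow> nat \<Rightarrow> complex" where
  "qfact q k = (\<Prod>i=1..k. qint q i)"

text \<open>Distinguished elements of U; kappa is the fixed square root of q, K = f_kappa.\<close>
definition fel :: "complex \<Rightarrow> U" where "fel \<mu> = bas (0, \<mu>, 0, 0)"
definition uone :: U where "uone = fel 1"
definition Kel :: "complex \<Rightarrow> U" where "Kel \<kappa> = fel \<kappa>"
definition Kinv :: "complex \<Rightarrow> U" where "Kinv \<kappa> = fel (inverse \<kappa>)"
definition Gel :: U where "Gel = bas (0, 1, 0, 1)"
text \<open>E^(1) = K^-1 E is the basis element (0,1,1,0), hence E = K E^(1);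
  F^(1) = F K^-1 is the basis element (1,1,0,0), hence F = F^(1) K.\<close>
definition Eel :: "(U \<Rightarrow> U \<Rightarrow> U) \<Rightarrow> complex \<Rightarrow> U" where
  "Eel m \<kappa> = m (Kel \<kappa>) (bas (0, 1, 1, 0))"
definition Fel :: "(U \<Rightarrow> U \<Rightarrow> U) \<Rightarrow> complex \<Rightarrow> U" where
  "Fel m \<kappa> = m (bas (1, 1, 0, 0)) (Kel \<kappa>)"

definition Fdiv :: "(U \<Rightarrow> U \<Rightarrow> U) \<Rightarrow> complex \<Rightarrow> complex \<Rightarrow> nat \<Rightarrow> U" where
  "Fdiv m q \<kappa> i = sc (inverse (qfact q i))
      (m (pow m uone (Fel m \<kappa>) i) (pow m uone (Kinv \<kappa>) i))"
definition Ediv :: "(U \<Rightarrow> U \<Rightarrow> U) \<Rightarrow> complex \<Rightarrow> complex \<Rightarrow> nat \<Rightarrow> U" where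
  "Ediv m q \<kappa> j = sc (inverse (qfact q j))
      (m (pow m uone (Kinv \<kappa>) j) (pow m uone (Eel m \<kappa>) j))"
definition Gdiv :: "(U \<Rightarrow> U \<Rightarrow> U) \<Rightarrow> nat \<Rightarrow> U" where
  "Gdiv m k = sc (inverse (fact k)) (pow m uone Gel k)"

definition U_algebra :: "complex \<Rightarrow> complex \<Rightarrow> (U \<Rightarrow> U \<Rightarrow> U) \<Rightarrow> bool" where
  "U_algebra q \<kappa> m \<longleftrightarrow>
     (\<forall>a b. valid_idx a \<longrightarrow> valid_idx b \<longrightarrow> m (bas a) (bas b) \<in> Uvec)
   \<and> (\<forall>x\<in>Uvec. \<forall>y\<in>Uvec. m x y = (\<Sum>a\<in>supp x. \<Sum>b\<in>supp y. sc (x a * y b) (m (bas a) (bas b))))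
   \<and> (\<forall>x\<in>Uvec. \<forall>y\<in>Uvec. \<forall>z\<in>Uvec. m (m x y) z = m x (m y z))
   \<and> (\<forall>x\<in>Uvec. m uone x = x \<and> m x uone = x)
   \<and> (\<forall>\<mu> \<nu>. \<mu> \<noteq> 0 \<longrightarrow> \<nu> \<noteq> 0 \<longrightarrow> m (fel \<mu>) (fel \<nu>) = fel (\<mu> * \<nu>))
   \<and> (\<forall>\<mu>. \<mu> \<noteq> 0 \<longrightarrow> m (fel \<mu>) (Eel m \<kappa>) = sc (\<mu>\<^sup>2) (m (Eel m \<kappa>) (fel \<mu>)))
   \<and> (\<forall>\<mu>. \<mu> \<noteq> 0 \<longrightarrow> m (fel \<mu>) (Fel m \<kappa>) = sc (inverse (\<mu>\<^sup>2)) (m (Fel m \<kappa>) (fel \<mu>)))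
   \<and> (\<forall>\<mu>. \<mu> \<noteq> 0 \<longrightarrow> m (fel \<mu>) Gel = m Gel (fel \<mu>))
   \<and> m Gel (Eel m \<kappa>) = m (Eel m \<kappa>) (Gel + sc 2 uone)
   \<and> m Gel (Fel m \<kappa>) = m (Fel m \<kappa>) (Gel - sc 2 uone)
   \<and> m (Eel m \<kappa>) (Fel m \<kappa>) - m (Fel m \<kappa>) (Eel m \<kappa>)
       = sc (inverse (q - inverse q)) (fel q - fel (inverse q))
   \<and> (\<forall>i \<mu> j k. \<mu> \<noteq> 0 \<longrightarrow>
        bas (i, \<mu>, j, k) = m (m (m (Fdiv m q \<kappa> i) (fel \<mu>)) (Ediv m q \<kappa> j)) (Gdiv m k))"

text \<open>The coproduct: algebra map with the given values on generators, i.e. on the basis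
  element F^(i) f_mu E^(j) G^(k) it is Delta(F^(i)) Delta(f_mu) Delta(E^(j)) Delta(G^(k)),
  extended linearly.\<close>
definition tone :: "UU" where "tone = tensor uone uone"

definition Delta_bas :: "(U \<Rightarrow> U \<Rightarrow> U) \<Rightarrow> complex \<Rightarrow> complex \<Rightarrow> idx \<Rightarrow> UU" where
  "Delta_bas m q \<kappa> b = (case b of (i, \<mu>, j, k) \<Rightarrow>
     (let DK = tensor (Kel \<kappa>) (Kel \<kappa>);
          DKi = tensor (Kinv \<kappa>) (Kinv \<kappa>);
          DE = tensor (Eel m \<kappa>) (Kel \<kappa>) + tensor (Kinv \<kappa>) (Eel m \<kappa>);
          DF = tensor (Fel m \<kappa>) (Kel \<kappa>) + tensor (Kinv \<kappa>) (Fel m \<kappa>);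
          DG = tensor uone Gel + tensor Gel uone;
          Df = tensor (fel \<mu>) (fel \<mu>);
          DFd = sc (inverse (qfact q i)) (mt m (pow (mt m) tone DF i) (pow (mt m) tone DKi i));
          DEd = sc (inverse (qfact q j)) (mt m (pow (mt m) tone DKi j) (pow (mt m) tone DE j));
          DGd = sc (inverse (fact k)) (pow (mt m) tone DG k)
      in mt m (mt m (mt m DFd Df) DEd) DGd))"

definition Delta :: "(U \<Rightarrow> U \<Rightarrow> U) \<Rightarrow> complex \<Rightarrow> complex \<Rightarrow> U \<Rightarrow> UU" where
  "Delta m q \<kappa> x = (\<Sum>b\<in>supp x. sc (x b) (Delta_bas m q \<kappa> b))"

definition right_coideal :: "(U \<Rightarrow> U \<Rightarrow> U) \<Rightarrow> complex \<Rightarrow> complex \<Rightarrow> U set \<Rightarrow> bool" where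
  "right_coideal m q \<kappa> X \<longleftrightarrow> subspace_U X \<and>
     (\<forall>x\<in>X. Delta m q \<kappa> x \<in> lin {tensor y u | y u. y \<in> X \<and> u \<in> Uvec})"

definition Umu :: "complex \<Rightarrow> U set" where
  "Umu \<mu> = {x \<in> Uvec. \<forall>b\<in>supp x. fst (snd b) = \<mu>}"

definition d13 :: "U \<Rightarrow> nat" where
  "d13 Y = Max ((\<lambda>b. fst b + fst (snd (snd b))) ` supp Y)"
definition d4 :: "U \<Rightarrow> nat" where
  "d4 Y = Max ((\<lambda>b. snd (snd (snd b))) ` supp Y)"

text \<open>The coefficient X_t in X = sum_t X_t G^(t): X_t is in Lin{F^(i) f_mu E^(j)}, i.e.
  supported on indices with k = 0, and X_t G^(t) is the part of X with G-degree t.\<close>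
definition Xcoef :: "U \<Rightarrow> nat \<Rightarrow> U" where
  "Xcoef X t = (\<lambda>(i, \<mu>, j, k). if k = 0 then X (i, \<mu>, j, t) else 0)"

definition s13 :: "U \<Rightarrow> nat \<Rightarrow> nat" where
  "s13 X t = Max {d13 (Xcoef X m') | m'. m' \<ge> t \<and> Xcoef X m' \<noteq> 0}"

text \<open>dim X \<ge> n (X possibly infinite-dimensional).\<close>
definition dim_ge :: "U set \<Rightarrow> nat \<Rightarrow> bool" where
  "dim_ge X n \<longleftrightarrow> (\<exists>B\<subseteq>X. lin_indep B \<and> card B = n)"

end

theory Submission
  imports Defs
begin



lemma sum_fun_apply: "(\<Sum>a\<in>A. f a) x = (\<Sum>a\<in>A. f a x)"
  by (induction A rule: infinite_finite_induct) auto

lemma sc_apply[simp]: "sc c f x = c * f x" by (simp add: sc_def)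
lemma sc_1[simp]: "sc 1 f = f" by (simp add: sc_def)
lemma sc_0[simp]: "sc 0 f = 0" by (simp add: sc_def fun_eq_iff)
lemma sc_zero[simp]: "sc c 0 = 0" by (simp add: sc_def fun_eq_iff)
lemma sc_sc[simp]: "sc a (sc b f) = sc (a*b) f" by (simp add: sc_def fun_eq_iff)
lemma sc_add: "sc a (f + g) = sc a f + sc a g" by (simp add: sc_def fun_eq_iff algebra_simps)
lemma sc_add_left: "sc (a + b) f = sc a f + sc b f" by (simp add: sc_def fun_eq_iff algebra_simps)
lemma sc_diff: "sc a (f - g) = sc a f - sc a g" by (simp add: sc_def fun_eq_iff algebra_simps)
lemma sc_sum: "sc a (\<Sum>i\<in>I. f i) = (\<Sum>i\<in>I. sc a (f i))"
  by (simp add: sc_def fun_eq_iff sum_fun_apply sum_distrib_left)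
lemma sc_sum_left: "sc (\<Sum>i\<in>I. c i) f = (\<Sum>i\<in>I. sc (c i) f)"
  by (simp add: sc_def fun_eq_iff sum_fun_apply sum_distrib_right)

lemma supp_add: "supp (f + g) \<subseteq> supp f \<union> supp g" by (auto simp: supp_def)
lemma supp_sc: "supp (sc c f) \<subseteq> supp f" by (auto simp: supp_def)
lemma supp_sum: "supp (\<Sum>i\<in>I. f i) \<subseteq> (\<Union>i\<in>I. supp (f i))"
  by (auto simp: supp_def sum_fun_apply) (meson sum.neutral)
lemma supp_zero[simp]: "supp 0 = {}" by (simp add: supp_def)

definition fs :: "('a \<Rightarrow> complex) \<Rightarrow> bool" where "fs f \<longleftrightarrow> finite (supp f)"

lemma fs_add: "fs f \<Longrightarrow> fs g \<Longrightarrow> fs (f + g)"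
  unfolding fs_def by (meson finite_Un finite_subset supp_add)
lemma fs_sc: "fs f \<Longrightarrow> fs (sc c f)"
  unfolding fs_def by (meson finite_subset supp_sc)
lemma fs_sum: "finite I \<Longrightarrow> (\<And>i. i \<in> I \<Longrightarrow> fs (f i)) \<Longrightarrow> fs (\<Sum>i\<in>I. f i)"
  unfolding fs_def by (rule finite_subset[OF supp_sum]) auto
lemma fs_zero: "fs 0" by (simp add: fs_def)

lemma supp_tensor: "supp (tensor x y) = supp x \<times> supp y"
  by (auto simp: supp_def tensor_def)
lemma fs_tensor: "fs x \<Longrightarrow> fs y \<Longrightarrow> fs (tensor x y)"
  by (simp add: fs_def supp_tensor)

lemma tensor_apply[simp]: "tensor x y (a, b) = x a * y b" by (simp add: tensor_def)
lemma tensor_sc_left: "tensor (sc c x) y = sc c (tensor x y)"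
  by (simp add: tensor_def sc_def fun_eq_iff)
lemma tensor_sc_right: "tensor x (sc c y) = sc c (tensor x y)"
  by (simp add: tensor_def sc_def fun_eq_iff algebra_simps)
lemma tensor_add_left: "tensor (x + x') y = tensor x y + tensor x' y"
  by (simp add: tensor_def fun_eq_iff algebra_simps)
lemma tensor_add_right: "tensor x (y + y') = tensor x y + tensor x y'"
  by (simp add: tensor_def fun_eq_iff algebra_simps)

lemma Uvec_fs: "x \<in> Uvec \<Longrightarrow> fs x" by (simp add: Uvec_def fs_def)
lemma Uvec_zero: "0 \<in> Uvec" by (simp add: Uvec_def)
lemma Uvec_add: "x \<in> Uvec \<Longrightarrow> y \<in> Uvec \<Longrightarrow> x + y \<in> Uvec"
  unfolding Uvec_def using supp_add[of x y] by (auto intro: finite_subset)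
lemma Uvec_sc: "x \<in> Uvec \<Longrightarrow> sc c x \<in> Uvec"
  unfolding Uvec_def using supp_sc[of c x] by (auto intro: finite_subset)
lemma Uvec_sum: "(\<And>i. i \<in> I \<Longrightarrow> f i \<in> Uvec) \<Longrightarrow> (\<Sum>i\<in>I. f i) \<in> Uvec"
  by (induction I rule: infinite_finite_induct) (auto simp: Uvec_zero Uvec_add)
lemma Uvec_diff: "x \<in> Uvec \<Longrightarrow> y \<in> Uvec \<Longrightarrow> x - y \<in> Uvec"
proof -
  assume "x \<in> Uvec" "y \<in> Uvec"
  then have "x + sc (-1) y \<in> Uvec" by (simp add: Uvec_add Uvec_sc)
  moreover have "x + sc (-1) y = x - y" by (simp add: sc_def fun_eq_iff)
  ultimately show ?thesis by simp
qed

lemma bas_apply: "bas b c = (if c = b then 1 else 0)" by (simp add: bas_def)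
lemma supp_bas: "supp (bas b) = {b}" by (simp add: supp_def bas_def)
lemma bas_Uvec: "valid_idx b \<Longrightarrow> bas b \<in> Uvec"
  by (simp add: Uvec_def supp_bas)
lemma bas_Uvec4[simp]: "\<mu> \<noteq> 0 \<Longrightarrow> bas (i, \<mu>, j, k) \<in> Uvec"
  by (simp add: bas_Uvec valid_idx_def)
lemma fel_Uvec[simp]: "\<mu> \<noteq> 0 \<Longrightarrow> fel \<mu> \<in> Uvec" by (simp add: fel_def)
lemma uone_Uvec[simp]: "uone \<in> Uvec" by (simp add: uone_def)
lemma Gel_Uvec[simp]: "Gel \<in> Uvec" by (simp add: Gel_def)

lemma pow_0[simp]: "pow mul one x 0 = one" by (simp add: pow_def)
lemma pow_Suc: "pow mul one x (Suc n) = mul x (pow mul one x n)" by (simp add: pow_def)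

lemma sum_sum_extend:
  fixes F :: "'a \<Rightarrow> 'b \<Rightarrow> ('c \<Rightarrow> complex)"
  assumes "finite A" "supp x \<subseteq> A" "finite B" "supp y \<subseteq> B" "finite (supp x)" "finite (supp y)"
  shows "(\<Sum>a\<in>supp x. \<Sum>b\<in>supp y. sc (x a * y b) (F a b)) = (\<Sum>a\<in>A. \<Sum>b\<in>B. sc (x a * y b) (F a b))"
proof -
  have "(\<Sum>a\<in>supp x. \<Sum>b\<in>supp y. sc (x a * y b) (F a b)) = (\<Sum>a\<in>supp x. \<Sum>b\<in>B. sc (x a * y b) (F a b))"
    apply (rule sum.cong[OF refl])
    apply (rule sum.mono_neutral_left)
    using assms by (auto simp: supp_def)
  also have "\<dots> = (\<Sum>a\<in>A. \<Sum>b\<in>B. sc (x a * y b) (F a b))"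
    apply (rule sum.mono_neutral_left)
    using assms by (auto simp: supp_def)
  finally show ?thesis .
qed




lemma not_alg_pow: fixes q :: complex assumes "\<not> algebraic q" "n > 0" shows "q ^ n \<noteq> 1"
proof
  assume h: "q ^ n = 1"
  let ?p = "monom (1::complex) n - 1"
  have "coeff ?p i \<in> \<int>" for i by (auto simp: coeff_monom)
  moreover have "?p \<noteq> 0"
  proof
    assume "?p = 0" then have "coeff ?p n = 0" by simp
    then show False using assms(2) by (simp add: coeff_monom)
  qed
  moreover have "poly ?p q = 0" using h by (simp add: poly_monom)
  ultimately show False using assms(1) algebraicI by blast
qed

lemma not_alg_nz: fixes q :: complex assumes "\<not> algebraic q" shows "q \<noteq> 0"
proof
  assume h: "q = 0"
  let ?p = "monom (1::complex) 1"
  have "coeff ?p i \<in> \<int>" for i by (auto simp: coeff_monom)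
  moreover have "?p \<noteq> 0" by (simp add: monom_eq_0_iff)
  moreover have "poly ?p q = 0" using h by (simp add: poly_monom)
  ultimately show False using assms(1) algebraicI by blast
qed

locale alg =
  fixes q \<kappa> :: complex and m :: "U \<Rightarrow> U \<Rightarrow> U"
  assumes UA: "U_algebra q \<kappa> m" and kq: "\<kappa>\<^sup>2 = q" and tr: "\<not> algebraic q"
begin

lemma m_bas: "valid_idx a \<Longrightarrow> valid_idx b \<Longrightarrow> m (bas a) (bas b) \<in> Uvec"
  using UA unfolding U_algebra_def by blast
lemma m_formula: "x \<in> Uvec \<Longrightarrow> y \<in> Uvec \<Longrightarrow>
   m x y = (\<Sum>a\<in>supp x. \<Sum>b\<in>supp y. sc (x a * y b) (m (bas a) (bas b)))"
  using UA unfolding U_algebra_def by blast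
lemma assoc: "x \<in> Uvec \<Longrightarrow> y \<in> Uvec \<Longrightarrow> z \<in> Uvec \<Longrightarrow> m (m x y) z = m x (m y z)"
  using UA unfolding U_algebra_def by blast
lemma unit_l[simp]: "x \<in> Uvec \<Longrightarrow> m uone x = x"
  using UA unfolding U_algebra_def by blast
lemma unit_r[simp]: "x \<in> Uvec \<Longrightarrow> m x uone = x"
  using UA unfolding U_algebra_def by blast
lemma fel_mult: "\<mu> \<noteq> 0 \<Longrightarrow> \<nu> \<noteq> 0 \<Longrightarrow> m (fel \<mu>) (fel \<nu>) = fel (\<mu> * \<nu>)"
  using UA unfolding U_algebra_def by blast
lemma rel_E: "\<mu> \<noteq> 0 \<Longrightarrow> m (fel \<mu>) (Eel m \<kappa>) = sc (\<mu>\<^sup>2) (m (Eel m \<kappa>) (fel \<mu>))"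
  using UA unfolding U_algebra_def by blast
lemma rel_F: "\<mu> \<noteq> 0 \<Longrightarrow> m (fel \<mu>) (Fel m \<kappa>) = sc (inverse (\<mu>\<^sup>2)) (m (Fel m \<kappa>) (fel \<mu>))"
  using UA unfolding U_algebra_def by blast
lemma PBW: "\<mu> \<noteq> 0 \<Longrightarrow>
        bas (i, \<mu>, j, k) = m (m (m (Fdiv m q \<kappa> i) (fel \<mu>)) (Ediv m q \<kappa> j)) (Gdiv m k)"
  using UA unfolding U_algebra_def by blast

lemma q_nz: "q \<noteq> 0" using not_alg_nz[OF tr] .
lemma k_nz[simp]: "\<kappa> \<noteq> 0" using q_nz kq by auto
lemma q_pow_ne1: "n > 0 \<Longrightarrow> q ^ n \<noteq> 1" using not_alg_pow[OF tr] by blast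

lemma qm_nz: "q - inverse q \<noteq> 0"
proof
  assume "q - inverse q = 0"
  then have "q * q = 1" using q_nz by (simp add: field_simps)
  then have "q ^ 2 = 1" by (simp add: power2_eq_square)
  then show False using q_pow_ne1[of 2] by simp
qed

lemma qint_nz: "n > 0 \<Longrightarrow> qint q n \<noteq> 0"
proof
  assume "n > 0" "qint q n = 0"
  then have "q ^ n - inverse q ^ n = 0" using qm_nz by (simp add: qint_def)
  then have "q ^ n * q ^ n = 1" using q_nz by (simp add: field_simps power_inverse)
  then have "q ^ (2*n) = 1" by (simp add: power_mult mult_2 power_add)
  then show False using q_pow_ne1[of "2*n"] \<open>n>0\<close> by simp
qed

lemma qfact_nz[simp]: "qfact q n \<noteq> 0"
  unfolding qfact_def using qint_nz by (simp add: prod_zero_iff)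

lemma qint_0[simp]: "qint q 0 = 0" by (simp add: qint_def)
lemma qint_1[simp]: "qint q 1 = 1" using qm_nz by (simp add: qint_def)
lemma qfact_0[simp]: "qfact q 0 = 1" by (simp add: qfact_def)
lemma qfact_Suc: "qfact q (Suc n) = qfact q n * qint q (Suc n)"
  by (simp add: qfact_def prod.nat_ivl_Suc')

lemma qint_add1: "qint q (a + b) = inverse q ^ b * qint q a + q ^ a * qint q b"
proof -
  have "q^(a+b) - inverse q^(a+b) = inverse q ^ b * (q^a - inverse q^a) + q^a * (q^b - inverse q^b)"
    using q_nz by (simp add: power_add algebra_simps power_inverse)
  then show ?thesis unfolding qint_def by (simp add: add_divide_distrib)
qed
lemma qint_add2: "qint q (a + b) = q ^ b * qint q a + inverse q ^ a * qint q b"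
proof -
  have "q^(a+b) - inverse q^(a+b) = q ^ b * (q^a - inverse q^a) + inverse q^a * (q^b - inverse q^b)"
    using q_nz by (simp add: power_add algebra_simps power_inverse)
  then show ?thesis unfolding qint_def by (simp add: add_divide_distrib)
qed

lemma m_ext: assumes "x \<in> Uvec" "y \<in> Uvec" "finite A" "supp x \<subseteq> A" "finite B" "supp y \<subseteq> B"
  shows "m x y = (\<Sum>a\<in>A. \<Sum>b\<in>B. sc (x a * y b) (m (bas a) (bas b)))"
  using m_formula[OF assms(1,2)] sum_sum_extend[OF assms(3-6)] assms(1,2) by (simp add: Uvec_def)

lemma m_Uvec[simp]: assumes "x \<in> Uvec" "y \<in> Uvec" shows "m x y \<in> Uvec"
proof -
  have "m x y = (\<Sum>a\<in>supp x. \<Sum>b\<in>supp y. sc (x a * y b) (m (bas a) (bas b)))"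
    using m_formula[OF assms] .
  also have "\<dots> \<in> Uvec"
    by (intro Uvec_sum Uvec_sc m_bas) (use assms in \<open>auto simp: Uvec_def\<close>)
  finally show ?thesis .
qed

lemma m_add_left: assumes "x \<in> Uvec" "x' \<in> Uvec" "y \<in> Uvec"
  shows "m (x + x') y = m x y + m x' y"
proof -
  let ?A = "supp x \<union> supp x'"
  have f: "finite ?A" using assms by (simp add: Uvec_def)
  have xx: "x + x' \<in> Uvec" using assms Uvec_add by blast
  have "m (x + x') y = (\<Sum>a\<in>?A. \<Sum>b\<in>supp y. sc ((x+x') a * y b) (m (bas a) (bas b)))"
    by (rule m_ext) (use assms xx f supp_add[of x x'] in \<open>auto simp: Uvec_def\<close>)
  also have "\<dots> = (\<Sum>a\<in>?A. \<Sum>b\<in>supp y. sc (x a * y b) (m (bas a) (bas b))) + (\<Sum>a\<in>?A. \<Sum>b\<in>supp y. sc (x' a * y b) (m (bas a) (bas b)))"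
    by (simp add: distrib_right sc_add_left sum.distrib)
  also have "\<dots> = m x y + m x' y"
    using m_ext[OF assms(1,3) f _ _ subset_refl] m_ext[OF assms(2,3) f _ _ subset_refl] assms
    by (simp add: Uvec_def)
  finally show ?thesis .
qed

lemma m_add_right: assumes "x \<in> Uvec" "y \<in> Uvec" "y' \<in> Uvec"
  shows "m x (y + y') = m x y + m x y'"
proof -
  let ?B = "supp y \<union> supp y'"
  have f: "finite ?B" using assms by (simp add: Uvec_def)
  have yy: "y + y' \<in> Uvec" using assms Uvec_add by blast
  have "m x (y + y') = (\<Sum>a\<in>supp x. \<Sum>b\<in>?B. sc (x a * (y+y') b) (m (bas a) (bas b)))"
    by (rule m_ext) (use assms yy f supp_add[of y y'] in \<open>auto simp: Uvec_def\<close>)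
  also have "\<dots> = (\<Sum>a\<in>supp x. \<Sum>b\<in>?B. sc (x a * y b) (m (bas a) (bas b))) + (\<Sum>a\<in>supp x. \<Sum>b\<in>?B. sc (x a * y' b) (m (bas a) (bas b)))"
    by (simp add: distrib_left sc_add_left sum.distrib)
  also have "\<dots> = m x y + m x y'"
    using m_ext[OF assms(1,2) _ subset_refl f] m_ext[OF assms(1,3) _ subset_refl f] assms
    by (simp add: Uvec_def)
  finally show ?thesis .
qed

lemma m_sc_left: assumes "x \<in> Uvec" "y \<in> Uvec" shows "m (sc c x) y = sc c (m x y)"
proof -
  have s: "sc c x \<in> Uvec" using assms Uvec_sc by blast
  have "m (sc c x) y = (\<Sum>a\<in>supp x. \<Sum>b\<in>supp y. sc ((sc c x) a * y b) (m (bas a) (bas b)))"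
    by (rule m_ext) (use assms s supp_sc[of c x] in \<open>auto simp: Uvec_def\<close>)
  also have "\<dots> = sc c (m x y)"
    using m_formula[OF assms] by (simp add: sc_sum mult.assoc)
  finally show ?thesis .
qed

lemma m_sc_right: assumes "x \<in> Uvec" "y \<in> Uvec" shows "m x (sc c y) = sc c (m x y)"
proof -
  have s: "sc c y \<in> Uvec" using assms Uvec_sc by blast
  have "m x (sc c y) = (\<Sum>a\<in>supp x. \<Sum>b\<in>supp y. sc (x a * (sc c y) b) (m (bas a) (bas b)))"
    by (rule m_ext) (use assms s supp_sc[of c y] in \<open>auto simp: Uvec_def\<close>)
  also have "\<dots> = sc c (m x y)"
    using m_formula[OF assms] by (simp add: sc_sum mult.left_commute)
  finally show ?thesis .
qed

lemma m_zero_left: "y \<in> Uvec \<Longrightarrow> m 0 y = 0"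
  using m_sc_left[of 0 y 0] Uvec_zero by simp
lemma m_zero_right: "x \<in> Uvec \<Longrightarrow> m x 0 = 0"
  using m_sc_right[of x 0 0] Uvec_zero by simp

lemma m_sum_left: "(\<And>i. i \<in> I \<Longrightarrow> f i \<in> Uvec) \<Longrightarrow> y \<in> Uvec \<Longrightarrow> m (\<Sum>i\<in>I. f i) y = (\<Sum>i\<in>I. m (f i) y)"
  by (induction I rule: infinite_finite_induct) (auto simp: m_zero_left m_add_left Uvec_sum)
lemma m_sum_right: "(\<And>i. i \<in> I \<Longrightarrow> f i \<in> Uvec) \<Longrightarrow> x \<in> Uvec \<Longrightarrow> m x (\<Sum>i\<in>I. f i) = (\<Sum>i\<in>I. m x (f i))"
  by (induction I rule: infinite_finite_induct) (auto simp: m_zero_right m_add_right Uvec_sum)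

end



context alg begin

lemma sum_times: "sum f (A \<times> B) = (\<Sum>a\<in>A. \<Sum>b\<in>B. f (a,b))"
  by (simp add: sum.cartesian_product)

abbreviation "TT p r \<equiv> tensor (m (bas (fst p)) (bas (fst r))) (m (bas (snd p)) (bas (snd r)))"

lemma mt_ext: assumes "fs z" "fs w" "finite P" "supp z \<subseteq> P" "finite R" "supp w \<subseteq> R"
  shows "mt m z w = (\<Sum>p\<in>P. \<Sum>r\<in>R. sc (z p * w r) (TT p r))"
  unfolding mt_def by (rule sum_sum_extend) (use assms in \<open>auto simp: fs_def\<close>)

lemma mt_add_left: assumes "fs z" "fs z'" "fs w" shows "mt m (z + z') w = mt m z w + mt m z' w"
proof -
  let ?P = "supp z \<union> supp z'"
  have f: "finite ?P" using assms by (simp add: fs_def)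
  have "mt m (z + z') w = (\<Sum>p\<in>?P. \<Sum>r\<in>supp w. sc ((z+z') p * w r) (TT p r))"
    by (rule mt_ext) (use assms f supp_add[of z z'] fs_add in \<open>auto simp: fs_def\<close>)
  also have "\<dots> = (\<Sum>p\<in>?P. \<Sum>r\<in>supp w. sc (z p * w r) (TT p r)) + (\<Sum>p\<in>?P. \<Sum>r\<in>supp w. sc (z' p * w r) (TT p r))"
    by (simp add: distrib_right sc_add_left sum.distrib)
  also have "\<dots> = mt m z w + mt m z' w"
    using mt_ext[OF assms(1,3) f _ _ subset_refl] mt_ext[OF assms(2,3) f _ _ subset_refl] assms
    by (simp add: fs_def)
  finally show ?thesis .
qed

lemma mt_add_right: assumes "fs z" "fs w" "fs w'" shows "mt m z (w + w') = mt m z w + mt m z w'"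
proof -
  let ?R = "supp w \<union> supp w'"
  have f: "finite ?R" using assms by (simp add: fs_def)
  have "mt m z (w + w') = (\<Sum>p\<in>supp z. \<Sum>r\<in>?R. sc (z p * (w+w') r) (TT p r))"
    by (rule mt_ext) (use assms f supp_add[of w w'] fs_add in \<open>auto simp: fs_def\<close>)
  also have "\<dots> = (\<Sum>p\<in>supp z. \<Sum>r\<in>?R. sc (z p * w r) (TT p r)) + (\<Sum>p\<in>supp z. \<Sum>r\<in>?R. sc (z p * w' r) (TT p r))"
    by (simp add: distrib_left sc_add_left sum.distrib)
  also have "\<dots> = mt m z w + mt m z w'"
    using mt_ext[OF assms(1,2) _ subset_refl f] mt_ext[OF assms(1,3) _ subset_refl f] assms
    by (simp add: fs_def)
  finally show ?thesis .
qed

lemma mt_sc_left: assumes "fs z" "fs w" shows "mt m (sc c z) w = sc c (mt m z w)"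
proof -
  have "mt m (sc c z) w = (\<Sum>p\<in>supp z. \<Sum>r\<in>supp w. sc ((sc c z) p * w r) (TT p r))"
    by (rule mt_ext) (use assms supp_sc[of c z] fs_sc in \<open>auto simp: fs_def\<close>)
  also have "\<dots> = sc c (mt m z w)"
    unfolding mt_def by (simp add: sc_sum mult.assoc)
  finally show ?thesis .
qed

lemma mt_sc_right: assumes "fs z" "fs w" shows "mt m z (sc c w) = sc c (mt m z w)"
proof -
  have "mt m z (sc c w) = (\<Sum>p\<in>supp z. \<Sum>r\<in>supp w. sc (z p * (sc c w) r) (TT p r))"
    by (rule mt_ext) (use assms supp_sc[of c w] fs_sc in \<open>auto simp: fs_def\<close>)
  also have "\<dots> = sc c (mt m z w)"
    unfolding mt_def by (simp add: sc_sum mult.left_commute)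
  finally show ?thesis .
qed

lemma mt_zero_left: "fs w \<Longrightarrow> mt m 0 w = 0"
  using mt_sc_left[of 0 w 0] fs_zero by simp
lemma mt_zero_right: "fs z \<Longrightarrow> mt m z 0 = 0"
  using mt_sc_right[of z 0 0] fs_zero by simp

lemma mt_sum_left: "(\<And>i. i \<in> I \<Longrightarrow> fs (f i)) \<Longrightarrow> fs w \<Longrightarrow> mt m (\<Sum>i\<in>I. f i) w = (\<Sum>i\<in>I. mt m (f i) w)"
  by (induction I rule: infinite_finite_induct) (auto simp: mt_zero_left mt_add_left fs_sum)
lemma mt_sum_right: "(\<And>i. i \<in> I \<Longrightarrow> fs (f i)) \<Longrightarrow> fs z \<Longrightarrow> mt m z (\<Sum>i\<in>I. f i) = (\<Sum>i\<in>I. mt m z (f i))"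
  by (induction I rule: infinite_finite_induct) (auto simp: mt_zero_right mt_add_right fs_sum)

lemma mt_tensor: assumes "x \<in> Uvec" "y \<in> Uvec" "x' \<in> Uvec" "y' \<in> Uvec"
  shows "mt m (tensor x y) (tensor x' y') = tensor (m x x') (m y y')"
proof (rule ext, clarify)
  fix s1 s2
  let ?M = "\<lambda>a b. m (bas a) (bas b)"
  have "mt m (tensor x y) (tensor x' y') (s1, s2) =
     (\<Sum>p\<in>supp x \<times> supp y. \<Sum>r\<in>supp x' \<times> supp y'. x (fst p) * y (snd p) * (x' (fst r) * y' (snd r)) * (?M (fst p) (fst r) s1 * ?M (snd p) (snd r) s2))"
    unfolding mt_def supp_tensor by (simp add: sum_fun_apply tensor_def)
  also have "\<dots> = (\<Sum>a\<in>supp x. \<Sum>c\<in>supp y. \<Sum>b\<in>supp x'. \<Sum>d\<in>supp y'. x a * y c * (x' b * y' d) * (?M a b s1 * ?M c d s2))"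
    by (simp only: sum_times fst_conv snd_conv)
  also have "\<dots> = (\<Sum>a\<in>supp x. \<Sum>b\<in>supp x'. \<Sum>c\<in>supp y. \<Sum>d\<in>supp y'. x a * y c * (x' b * y' d) * (?M a b s1 * ?M c d s2))"
    by (rule sum.cong[OF refl], rule sum.swap)
  also have "\<dots> = (\<Sum>a\<in>supp x. \<Sum>b\<in>supp x'. x a * x' b * ?M a b s1) * (\<Sum>c\<in>supp y. \<Sum>d\<in>supp y'. y c * y' d * ?M c d s2)"
    apply (simp only: sum_distrib_right)
    apply (simp only: sum_distrib_left)
    by (simp add: mult_ac)
  also have "\<dots> = m x x' s1 * m y y' s2"
    unfolding m_formula[OF assms(1,3)] m_formula[OF assms(2,4)] sum_fun_apply sc_apply ..
  finally show "mt m (tensor x y) (tensor x' y') (s1, s2) = tensor (m x x') (m y y') (s1, s2)"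
    by simp
qed

lemma Uvec_tensor_fs: "x \<in> Uvec \<Longrightarrow> y \<in> Uvec \<Longrightarrow> fs (tensor x y)"
  by (simp add: Uvec_fs fs_tensor)

lemma fs_sumtens: "(\<And>a. a \<in> A \<Longrightarrow> x a \<in> Uvec \<and> y a \<in> Uvec) \<Longrightarrow> finite A \<Longrightarrow>
   fs (\<Sum>a\<in>A. sc (c a) (tensor (x a) (y a)))"
  by (intro fs_sum fs_sc Uvec_tensor_fs) auto

lemma mt_sumtens: assumes "finite A" "finite B"
  "\<And>a. a \<in> A \<Longrightarrow> x a \<in> Uvec \<and> y a \<in> Uvec" "\<And>b. b \<in> B \<Longrightarrow> x' b \<in> Uvec \<and> y' b \<in> Uvec"
  shows "mt m (\<Sum>a\<in>A. sc (c a) (tensor (x a) (y a))) (\<Sum>b\<in>B. sc (d b) (tensor (x' b) (y' b)))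
    = (\<Sum>a\<in>A. \<Sum>b\<in>B. sc (c a * d b) (tensor (m (x a) (x' b)) (m (y a) (y' b))))"
proof -
  have "mt m (\<Sum>a\<in>A. sc (c a) (tensor (x a) (y a))) (\<Sum>b\<in>B. sc (d b) (tensor (x' b) (y' b)))
     = (\<Sum>a\<in>A. sc (c a) (mt m (tensor (x a) (y a)) (\<Sum>b\<in>B. sc (d b) (tensor (x' b) (y' b)))))"
    using assms by (simp add: mt_sum_left fs_sc Uvec_tensor_fs fs_sumtens mt_sc_left)
  also have "\<dots> = (\<Sum>a\<in>A. sc (c a) (\<Sum>b\<in>B. sc (d b) (mt m (tensor (x a) (y a)) (tensor (x' b) (y' b)))))"
    using assms by (intro sum.cong refl) (simp add: mt_sum_right fs_sc Uvec_tensor_fs mt_sc_right)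
  also have "\<dots> = (\<Sum>a\<in>A. \<Sum>b\<in>B. sc (c a * d b) (tensor (m (x a) (x' b)) (m (y a) (y' b))))"
    using assms by (intro sum.cong refl) (simp add: sc_sum mt_tensor)
  finally show ?thesis .
qed

lemma mt_tens_sumtens: assumes "finite B" "x \<in> Uvec" "y \<in> Uvec"
  "\<And>b. b \<in> B \<Longrightarrow> x' b \<in> Uvec \<and> y' b \<in> Uvec"
  shows "mt m (tensor x y) (\<Sum>b\<in>B. sc (d b) (tensor (x' b) (y' b)))
    = (\<Sum>b\<in>B. sc (d b) (tensor (m x (x' b)) (m y (y' b))))"
  using mt_sumtens[of "{()}" B "\<lambda>_. x" "\<lambda>_. y" x' y' "\<lambda>_. 1" d] assms by simp

lemma mt_sumtens_tens: assumes "finite A" "x' \<in> Uvec" "y' \<in> Uvec"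
  "\<And>a. a \<in> A \<Longrightarrow> x a \<in> Uvec \<and> y a \<in> Uvec"
  shows "mt m (\<Sum>a\<in>A. sc (c a) (tensor (x a) (y a))) (tensor x' y')
    = (\<Sum>a\<in>A. sc (c a) (tensor (m (x a) x') (m (y a) y')))"
  using mt_sumtens[of A "{()}" x y "\<lambda>_. x'" "\<lambda>_. y'" c "\<lambda>_. 1"] assms by simp

end



context alg begin
declare sc_apply[simp del]

abbreviation "Fd \<equiv> Fdiv m q \<kappa>"
abbreviation "Ed \<equiv> Ediv m q \<kappa>"
abbreviation "Gd \<equiv> Gdiv m"
abbreviation "FF \<equiv> Fel m \<kappa>"
abbreviation "EE \<equiv> Eel m \<kappa>"
abbreviation "Fp \<equiv> pow m uone FF"
abbreviation "Ep \<equiv> pow m uone EE"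
abbreviation "Kp \<equiv> pow m uone (Kinv \<kappa>)"
abbreviation "Gp \<equiv> pow m uone Gel"

lemma Kp_fel: "Kp n = fel (inverse \<kappa> ^ n)"
  by (induction n) (auto simp: pow_Suc Kinv_def fel_mult uone_def)

lemma FF_Uvec[simp]: "FF \<in> Uvec" by (simp add: Fel_def Kel_def)
lemma EE_Uvec[simp]: "EE \<in> Uvec" by (simp add: Eel_def Kel_def)
lemma Kinv_Uvec[simp]: "Kinv \<kappa> \<in> Uvec" by (simp add: Kinv_def)
lemma Kel_Uvec[simp]: "Kel \<kappa> \<in> Uvec" by (simp add: Kel_def)
lemma pow_Uvec[simp]: "x \<in> Uvec \<Longrightarrow> pow m uone x n \<in> Uvec"
  by (induction n) (auto simp: pow_Suc)
lemma Fd_Uvec[simp]: "Fd n \<in> Uvec" by (simp add: Fdiv_def Uvec_sc)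
lemma Ed_Uvec[simp]: "Ed n \<in> Uvec" by (simp add: Ediv_def Uvec_sc)
lemma Gd_Uvec[simp]: "Gd n \<in> Uvec" by (simp add: Gdiv_def Uvec_sc)

lemma Fd_0: "Fd 0 = uone" by (simp add: Fdiv_def)
lemma Ed_0: "Ed 0 = uone" by (simp add: Ediv_def)
lemma Gd_0: "Gd 0 = uone" by (simp add: Gdiv_def)

lemma Fd_inv: "m (Fp n) (Kp n) = sc (qfact q n) (Fd n)"
  by (simp add: Fdiv_def)
lemma Ed_inv: "m (Kp n) (Ep n) = sc (qfact q n) (Ed n)"
  by (simp add: Ediv_def)
lemma Gd_inv: "Gp n = sc (fact n) (Gd n)"
  by (simp add: Gdiv_def)

lemma basF: "\<nu> \<noteq> 0 \<Longrightarrow> bas (n, \<nu>, 0, 0) = m (Fd n) (fel \<nu>)"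
  by (simp add: PBW Ed_0 Gd_0)
lemma basE: "\<nu> \<noteq> 0 \<Longrightarrow> bas (0, \<nu>, b, 0) = m (fel \<nu>) (Ed b)"
  by (simp add: PBW Fd_0 Gd_0)
lemma basG: "bas (0, 1, 0, c) = Gd c"
  by (simp add: PBW Fd_0 Ed_0 flip: uone_def)
lemma basFE: "\<nu> \<noteq> 0 \<Longrightarrow> bas (a, \<nu>, b, 0) = m (m (Fd a) (fel \<nu>)) (Ed b)"
  by (simp add: PBW Gd_0)

lemma glue1: "\<nu> \<noteq> 0 \<Longrightarrow> \<rho> \<noteq> 0 \<Longrightarrow> m (bas (a, \<nu>, 0, 0)) (fel \<rho>) = bas (a, \<nu> * \<rho>, 0, 0)"
  by (simp add: basF assoc fel_mult)
lemma glue2: "\<nu> \<noteq> 0 \<Longrightarrow> \<rho> \<noteq> 0 \<Longrightarrow> m (bas (a, \<nu>, 0, 0)) (bas (0, \<rho>, b, 0)) = bas (a, \<nu> * \<rho>, b, 0)"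
proof -
  assume a: "\<nu> \<noteq> 0" "\<rho> \<noteq> 0"
  have "m (fel \<nu>) (m (fel \<rho>) (Ed b)) = m (fel (\<nu>*\<rho>)) (Ed b)"
    using a by (simp add: fel_mult flip: assoc)
  then show ?thesis using a by (simp add: basF basE basFE assoc Fd_0 Ed_0)
qed
lemma glue3: "\<nu> \<noteq> 0 \<Longrightarrow> m (bas (a, \<nu>, b, 0)) (bas (0, 1, 0, c)) = bas (a, \<nu>, b, c)"
  by (simp add: basFE basG PBW Gd_0)
lemma glue4: "\<nu> \<noteq> 0 \<Longrightarrow> \<rho> \<noteq> 0 \<Longrightarrow> m (fel \<rho>) (bas (0, \<nu>, b, 0)) = bas (0, \<rho> * \<nu>, b, 0)"
  by (simp add: basE flip: assoc) (simp add: fel_mult)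

lemma Fel_step: assumes "\<nu> \<noteq> 0"
  shows "m FF (bas (a, \<nu>, 0, 0)) = sc (qint q (Suc a)) (bas (Suc a, \<kappa> * \<nu>, 0, 0))"
proof -
  have kp: "Kp a = m (Kp (Suc a)) (fel \<kappa>)"
    by (simp add: Kp_fel fel_mult field_simps)
  have "m FF (Fd a) = sc (inverse (qfact q a)) (m (Fp (Suc a)) (Kp a))"
    by (simp add: Fdiv_def m_sc_right pow_Suc flip: assoc)
  also have "\<dots> = sc (inverse (qfact q a)) (m (m (Fp (Suc a)) (Kp (Suc a))) (fel \<kappa>))"
    by (subst kp) (simp add: assoc)
  also have "\<dots> = sc (inverse (qfact q a) * qfact q (Suc a)) (m (Fd (Suc a)) (fel \<kappa>))"
    by (simp add: Fd_inv m_sc_left)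
  also have "inverse (qfact q a) * qfact q (Suc a) = qint q (Suc a)"
    by (simp add: qfact_Suc)
  finally have h: "m FF (Fd a) = sc (qint q (Suc a)) (m (Fd (Suc a)) (fel \<kappa>))" .
  have "m FF (bas (a, \<nu>, 0, 0)) = m (m FF (Fd a)) (fel \<nu>)"
    using assms by (simp add: basF assoc)
  also have "\<dots> = sc (qint q (Suc a)) (bas (Suc a, \<kappa> * \<nu>, 0, 0))"
    using assms by (simp add: h m_sc_left assoc fel_mult basF)
  finally show ?thesis .
qed

lemma fFp: assumes "\<rho> \<noteq> 0"
  shows "m (fel \<rho>) (Fp n) = sc (inverse \<rho> ^ (2*n)) (m (Fp n) (fel \<rho>))"
proof (induction n)
  case 0 then show ?case using assms by (simp add: uone_def fel_mult)
next
  case (Suc n)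
  have "m (fel \<rho>) (Fp (Suc n)) = m (m (fel \<rho>) FF) (Fp n)"
    using assms by (simp add: pow_Suc assoc)
  also have "\<dots> = sc (inverse (\<rho>\<^sup>2)) (m FF (m (fel \<rho>) (Fp n)))"
    using assms by (simp add: rel_F m_sc_left assoc)
  also have "\<dots> = sc (inverse (\<rho>\<^sup>2) * inverse \<rho> ^ (2*n)) (m (Fp (Suc n)) (fel \<rho>))"
    using assms by (simp add: Suc m_sc_right pow_Suc flip: assoc)
  also have "inverse (\<rho>\<^sup>2) * inverse \<rho> ^ (2*n) = inverse \<rho> ^ (2 * Suc n)"
    by (simp add: power_add power2_eq_square power_inverse mult_2 field_simps)
  finally show ?case .
qed

lemma fF: assumes "\<rho> \<noteq> 0" "\<nu> \<noteq> 0"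
  shows "m (fel \<rho>) (bas (n, \<nu>, 0, 0)) = sc (inverse \<rho> ^ (2*n)) (bas (n, \<rho> * \<nu>, 0, 0))"
proof -
  have c: "m (fel \<rho>) (Kp n) = m (Kp n) (fel \<rho>)"
    using assms by (simp add: Kp_fel fel_mult mult.commute)
  have "m (fel \<rho>) (Fd n) = sc (inverse (qfact q n)) (m (m (fel \<rho>) (Fp n)) (Kp n))"
    using assms by (simp add: Fdiv_def m_sc_right assoc)
  also have "\<dots> = sc (inverse (qfact q n) * inverse \<rho> ^ (2*n)) (m (m (Fp n) (Kp n)) (fel \<rho>))"
    using assms by (simp add: fFp m_sc_left assoc c)
  also have "\<dots> = sc (inverse (qfact q n) * inverse \<rho> ^ (2*n) * qfact q n) (m (Fd n) (fel \<rho>))"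
    using assms by (simp add: Fd_inv m_sc_left)
  also have "inverse (qfact q n) * inverse \<rho> ^ (2*n) * qfact q n = inverse \<rho> ^ (2*n)"
    by simp
  finally have h: "m (fel \<rho>) (Fd n) = sc (inverse \<rho> ^ (2*n)) (m (Fd n) (fel \<rho>))" .
  show ?thesis
    using assms by (simp add: basF h m_sc_left assoc fel_mult flip: assoc[of "fel \<rho>"])
qed

lemma Eel_step: assumes "\<nu> \<noteq> 0"
  shows "m EE (bas (0, \<nu>, b, 0)) = sc (inverse (\<nu>\<^sup>2) * q ^ b * qint q (Suc b)) (bas (0, \<kappa> * \<nu>, Suc b, 0))"
proof -
  have eK: "m EE (Kp b) = sc (q ^ b) (m (Kp b) EE)"
  proof -
    have "m (Kp b) EE = sc ((inverse \<kappa> ^ b)\<^sup>2) (m EE (Kp b))"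
      by (simp add: Kp_fel rel_E)
    then have "sc (q ^ b) (m (Kp b) EE) = sc (q^b * (inverse \<kappa> ^ b)\<^sup>2) (m EE (Kp b))" by simp
    also have "q^b * (inverse \<kappa> ^ b)\<^sup>2 = 1"
      using kq[symmetric] by (simp add: power_inverse field_simps flip: power_mult)
    finally show ?thesis by simp
  qed
  have eN: "m EE (fel \<nu>) = sc (inverse (\<nu>\<^sup>2)) (m (fel \<nu>) EE)"
    using assms by (simp add: rel_E)
  have kp: "Kp b = m (fel \<kappa>) (Kp (Suc b))"
    by (simp add: Kp_fel fel_mult field_simps)
  have "m EE (Ed b) = sc (inverse (qfact q b)) (m (m EE (Kp b)) (Ep b))"
    by (simp add: Ediv_def m_sc_right assoc)
  also have "\<dots> = sc (inverse (qfact q b) * q ^ b) (m (Kp b) (Ep (Suc b)))"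
    by (simp add: eK m_sc_left assoc pow_Suc)
  also have "\<dots> = sc (inverse (qfact q b) * q ^ b) (m (fel \<kappa>) (m (Kp (Suc b)) (Ep (Suc b))))"
    by (subst kp) (simp add: assoc)
  also have "\<dots> = sc (inverse (qfact q b) * q ^ b * qfact q (Suc b)) (m (fel \<kappa>) (Ed (Suc b)))"
    by (simp add: Ed_inv m_sc_right)
  also have "inverse (qfact q b) * q ^ b * qfact q (Suc b) = q ^ b * qint q (Suc b)"
    by (simp add: qfact_Suc)
  finally have h: "m EE (Ed b) = sc (q ^ b * qint q (Suc b)) (m (fel \<kappa>) (Ed (Suc b)))" .
  have "m EE (bas (0, \<nu>, b, 0)) = m (m EE (fel \<nu>)) (Ed b)"
    using assms by (simp add: basE assoc)
  also have "\<dots> = sc (inverse (\<nu>\<^sup>2)) (m (fel \<nu>) (m EE (Ed b)))"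
    using assms by (simp add: eN m_sc_left assoc)
  also have "\<dots> = sc (inverse (\<nu>\<^sup>2) * (q ^ b * qint q (Suc b))) (bas (0, \<kappa> * \<nu>, Suc b, 0))"
    using assms by (simp add: h m_sc_right basE fel_mult mult.commute flip: assoc)
  finally show ?thesis by (simp add: mult.assoc)
qed

lemma Gel_step: "m Gel (bas (0, 1, 0, c)) = sc (of_nat (Suc c)) (bas (0, 1, 0, Suc c))"
proof -
  have "m Gel (Gd c) = sc (inverse (fact c)) (Gp (Suc c))"
    by (simp add: Gdiv_def m_sc_right pow_Suc)
  also have "\<dots> = sc (inverse (fact c) * fact (Suc c)) (Gd (Suc c))"
    by (simp add: Gd_inv)
  also have "inverse (fact c) * fact (Suc c) = (of_nat (Suc c) :: complex)"
    by (simp add: field_simps)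
  finally have h: "m Gel (Gd c) = sc (of_nat (Suc c)) (Gd (Suc c))" .
  show ?thesis by (simp only: basG h)
qed

end



context alg begin

abbreviation "DF \<equiv> tensor FF (Kel \<kappa>) + tensor (Kinv \<kappa>) FF"
abbreviation "DE \<equiv> tensor EE (Kel \<kappa>) + tensor (Kinv \<kappa>) EE"
abbreviation "DG \<equiv> tensor uone Gel + tensor Gel uone"
abbreviation "DKi \<equiv> tensor (Kinv \<kappa>) (Kinv \<kappa>)"

lemma k2n: "\<kappa> ^ (2*n) = q ^ n" using kq by (simp add: power_mult)
lemma ik2n: "inverse \<kappa> ^ (2*n) = inverse q ^ n" using kq by (simp add: power_mult power_inverse)

lemma pow_mt_Suc: "pow (mt m) tone x (Suc n) = mt m x (pow (mt m) tone x n)"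
  by (simp add: pow_Suc)

definition TF :: "nat \<Rightarrow> nat \<Rightarrow> UU" where
  "TF i a = tensor (bas (a, \<kappa> ^ a * inverse \<kappa> ^ (i - a), 0, 0)) (bas (i - a, \<kappa> ^ i, 0, 0))"

lemma DFpow: "pow (mt m) tone DF i = (\<Sum>a\<le>i. sc (qfact q i) (TF i a))"
proof (induction i)
  case 0 show ?case by (simp add: TF_def tone_def uone_def fel_def)
next
  case (Suc i)
  let ?S = "\<Sum>a\<le>i. sc (qfact q i) (TF i a)"
  have fsS: "fs ?S" unfolding TF_def by (intro fs_sumtens) auto
  have "mt m DF ?S = mt m (tensor FF (Kel \<kappa>)) ?S + mt m (tensor (Kinv \<kappa>) FF) ?S"
    by (rule mt_add_left) (auto intro: Uvec_tensor_fs fsS)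
  also have "mt m (tensor FF (Kel \<kappa>)) ?S = (\<Sum>a\<le>i. sc (qfact q i * qint q (Suc a) * inverse q ^ (Suc i - Suc a)) (TF (Suc i) (Suc a)))"
    unfolding TF_def
    apply (subst mt_tens_sumtens)
        apply (auto simp: Kel_def)[4]
    apply (rule sum.cong[OF refl])
    apply (simp add: Fel_step fF tensor_sc_left tensor_sc_right ik2n Kel_def)
    apply (simp add: mult_ac)
    done
  also have "mt m (tensor (Kinv \<kappa>) FF) ?S = (\<Sum>a\<le>i. sc (qfact q i * q ^ a * qint q (Suc i - a)) (TF (Suc i) a))"
    unfolding TF_def
    apply (subst mt_tens_sumtens)
        apply (auto simp: Kinv_def)[4]
    apply (rule sum.cong[OF refl])
    apply (simp add: Fel_step fF tensor_sc_left tensor_sc_right k2n Suc_diff_le Kinv_def)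
    apply (simp add: mult_ac)
    done
  also have "(\<Sum>a\<le>i. sc (qfact q i * qint q (Suc a) * inverse q ^ (Suc i - Suc a)) (TF (Suc i) (Suc a)))
      = (\<Sum>a\<le>Suc i. sc (qfact q i * qint q a * inverse q ^ (Suc i - a)) (TF (Suc i) a))"
    by (subst sum.atMost_Suc_shift) simp
  also have "(\<Sum>a\<le>i. sc (qfact q i * q ^ a * qint q (Suc i - a)) (TF (Suc i) a))
      = (\<Sum>a\<le>Suc i. sc (qfact q i * q ^ a * qint q (Suc i - a)) (TF (Suc i) a))"
    by (subst sum.atMost_Suc) simp
  also have "(\<Sum>a\<le>Suc i. sc (qfact q i * qint q a * inverse q ^ (Suc i - a)) (TF (Suc i) a))
     + (\<Sum>a\<le>Suc i. sc (qfact q i * q ^ a * qint q (Suc i - a)) (TF (Suc i) a))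
     = (\<Sum>a\<le>Suc i. sc (qfact q (Suc i)) (TF (Suc i) a))"
  proof -
    have "qfact q i * qint q a * inverse q ^ (Suc i - a) + qfact q i * q ^ a * qint q (Suc i - a) = qfact q (Suc i)"
      if "a \<le> Suc i" for a
    proof -
      have "qint q (Suc i) = inverse q ^ (Suc i - a) * qint q a + q ^ a * qint q (Suc i - a)"
        using qint_add1[of a "Suc i - a"] that by simp
      then show ?thesis by (simp add: qfact_Suc algebra_simps)
    qed
    then have "(\<Sum>a\<le>Suc i. sc (qfact q (Suc i)) (TF (Suc i) a)) =
      (\<Sum>a\<le>Suc i. sc (qfact q i * qint q a * inverse q ^ (Suc i - a)) (TF (Suc i) a)
          + sc (qfact q i * q ^ a * qint q (Suc i - a)) (TF (Suc i) a))"
      by (intro sum.cong refl) (simp add: sc_add_left[symmetric])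
    then show ?thesis by (simp only: sum.distrib)
  qed
  finally show ?case using Suc by (simp add: pow_mt_Suc)
qed

end



context alg begin

definition TE :: "nat \<Rightarrow> nat \<Rightarrow> UU" where
  "TE j b = tensor (bas (0, \<kappa> ^ b * inverse \<kappa> ^ (j - b), b, 0)) (bas (0, \<kappa> ^ j, j - b, 0))"

lemma hlp1: "inverse ((\<kappa> ^ b * inverse \<kappa> ^ n)\<^sup>2) * q ^ b = q ^ n"
proof -
  have "(\<kappa> ^ b * inverse \<kappa> ^ n)\<^sup>2 = q ^ b * inverse q ^ n"
    using k2n[of b] ik2n[of n] by (simp add: power_mult_distrib mult.commute flip: power_mult)
  then show ?thesis using q_nz by (simp add: field_simps power_inverse)
qed

lemma hlp2: "b \<le> j \<Longrightarrow> inverse ((\<kappa> ^ j)\<^sup>2) * q ^ (j - b) = inverse q ^ b"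
proof -
  assume "b \<le> j"
  then obtain n where j: "j = b + n" using le_Suc_ex by blast
  have "(\<kappa> ^ j)\<^sup>2 = q ^ j" using k2n[of j] by (simp add: power_mult mult.commute)
  then show ?thesis using q_nz j by (simp add: field_simps power_inverse power_add)
qed

lemma DEpow: "pow (mt m) tone DE j = (\<Sum>b\<le>j. sc (qfact q j) (TE j b))"
proof (induction j)
  case 0 show ?case by (simp add: TE_def tone_def uone_def fel_def)
next
  case (Suc j)
  let ?S = "\<Sum>b\<le>j. sc (qfact q j) (TE j b)"
  have fsS: "fs ?S" unfolding TE_def by (intro fs_sumtens) auto
  have "mt m DE ?S = mt m (tensor EE (Kel \<kappa>)) ?S + mt m (tensor (Kinv \<kappa>) EE) ?S"
    by (rule mt_add_left) (auto intro: Uvec_tensor_fs fsS)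
  also have "mt m (tensor EE (Kel \<kappa>)) ?S = (\<Sum>b\<le>j. sc (qfact q j * qint q (Suc b) * q ^ (Suc j - Suc b)) (TE (Suc j) (Suc b)))"
    unfolding TE_def
    apply (subst mt_tens_sumtens)
        apply (auto simp: Kel_def)[4]
    apply (rule sum.cong[OF refl])
    apply (simp add: Eel_step glue4 tensor_sc_left tensor_sc_right Kel_def hlp1)
    apply (simp add: mult_ac)
    done
  also have "mt m (tensor (Kinv \<kappa>) EE) ?S = (\<Sum>b\<le>j. sc (qfact q j * inverse q ^ b * qint q (Suc j - b)) (TE (Suc j) b))"
    unfolding TE_def
    apply (subst mt_tens_sumtens)
        apply (auto simp: Kinv_def)[4]
    apply (rule sum.cong[OF refl])
    apply (simp add: Eel_step glue4 tensor_sc_left tensor_sc_right Suc_diff_le Kinv_def hlp2)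
    apply (simp add: mult_ac)
    done
  also have "(\<Sum>b\<le>j. sc (qfact q j * qint q (Suc b) * q ^ (Suc j - Suc b)) (TE (Suc j) (Suc b)))
      = (\<Sum>b\<le>Suc j. sc (qfact q j * qint q b * q ^ (Suc j - b)) (TE (Suc j) b))"
    by (subst sum.atMost_Suc_shift) simp
  also have "(\<Sum>b\<le>j. sc (qfact q j * inverse q ^ b * qint q (Suc j - b)) (TE (Suc j) b))
      = (\<Sum>b\<le>Suc j. sc (qfact q j * inverse q ^ b * qint q (Suc j - b)) (TE (Suc j) b))"
    by (subst sum.atMost_Suc) simp
  also have "(\<Sum>b\<le>Suc j. sc (qfact q j * qint q b * q ^ (Suc j - b)) (TE (Suc j) b))
     + (\<Sum>b\<le>Suc j. sc (qfact q j * inverse q ^ b * qint q (Suc j - b)) (TE (Suc j) b))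
     = (\<Sum>b\<le>Suc j. sc (qfact q (Suc j)) (TE (Suc j) b))"
  proof -
    have "qfact q j * qint q b * q ^ (Suc j - b) + qfact q j * inverse q ^ b * qint q (Suc j - b) = qfact q (Suc j)"
      if "b \<le> Suc j" for b
    proof -
      have "qint q (Suc j) = q ^ (Suc j - b) * qint q b + inverse q ^ b * qint q (Suc j - b)"
        using qint_add2[of b "Suc j - b"] that by simp
      then show ?thesis by (simp add: qfact_Suc algebra_simps)
    qed
    then have "(\<Sum>b\<le>Suc j. sc (qfact q (Suc j)) (TE (Suc j) b)) =
      (\<Sum>b\<le>Suc j. sc (qfact q j * qint q b * q ^ (Suc j - b)) (TE (Suc j) b)
          + sc (qfact q j * inverse q ^ b * qint q (Suc j - b)) (TE (Suc j) b))"
      by (intro sum.cong refl) (simp add: sc_add_left[symmetric])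
    then show ?thesis by (simp only: sum.distrib)
  qed
  finally show ?case using Suc by (simp add: pow_mt_Suc)
qed

definition TG :: "nat \<Rightarrow> nat \<Rightarrow> UU" where
  "TG k c = tensor (bas (0, 1, 0, c)) (bas (0, 1, 0, k - c))"

lemma uone_bas: "uone = bas (0, 1, 0, 0)" by (simp add: uone_def fel_def)

lemma DGpow: "pow (mt m) tone DG k = (\<Sum>c\<le>k. sc (fact k) (TG k c))"
proof (induction k)
  case 0 show ?case by (simp add: TG_def tone_def uone_bas)
next
  case (Suc k)
  let ?S = "\<Sum>c\<le>k. sc (fact k) (TG k c)"
  have fsS: "fs ?S" unfolding TG_def by (intro fs_sumtens) auto
  have "mt m DG ?S = mt m (tensor uone Gel) ?S + mt m (tensor Gel uone) ?S"
    by (rule mt_add_left) (auto intro: Uvec_tensor_fs fsS)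
  also have "mt m (tensor uone Gel) ?S = (\<Sum>c\<le>k. sc (fact k * of_nat (Suc k - c)) (TG (Suc k) c))"
    unfolding TG_def
    apply (subst mt_tens_sumtens)
        apply (auto)[4]
    apply (rule sum.cong[OF refl])
    apply (simp add: Gel_step tensor_sc_left tensor_sc_right Suc_diff_le del: of_nat_Suc)
    done
  also have "mt m (tensor Gel uone) ?S = (\<Sum>c\<le>k. sc (fact k * of_nat (Suc c)) (TG (Suc k) (Suc c)))"
    unfolding TG_def
    apply (subst mt_tens_sumtens)
        apply (auto)[4]
    apply (rule sum.cong[OF refl])
    apply (simp add: Gel_step tensor_sc_left tensor_sc_right del: of_nat_Suc)
    done
  also have "(\<Sum>c\<le>k. sc (fact k * of_nat (Suc c)) (TG (Suc k) (Suc c)))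
      = (\<Sum>c\<le>Suc k. sc (fact k * of_nat c) (TG (Suc k) c))"
    by (subst sum.atMost_Suc_shift) simp
  also have "(\<Sum>c\<le>k. sc (fact k * of_nat (Suc k - c)) (TG (Suc k) c))
      = (\<Sum>c\<le>Suc k. sc (fact k * of_nat (Suc k - c)) (TG (Suc k) c))"
    by (subst sum.atMost_Suc) simp
  also have "(\<Sum>c\<le>Suc k. sc (fact k * of_nat (Suc k - c)) (TG (Suc k) c))
     + (\<Sum>c\<le>Suc k. sc (fact k * of_nat c) (TG (Suc k) c))
     = (\<Sum>c\<le>Suc k. sc (fact (Suc k)) (TG (Suc k) c))"
  proof -
    have "fact k * of_nat (Suc k - c) + fact k * of_nat c = (fact (Suc k) :: complex)"
      if "c \<le> Suc k" for c
    proof -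
      have "of_nat (Suc k - c) + of_nat c = (of_nat (Suc k) :: complex)"
        using that by (simp flip: of_nat_add)
      then show ?thesis by (simp add: algebra_simps flip: distrib_left)
    qed
    then have "(\<Sum>c\<le>Suc k. sc (fact (Suc k)) (TG (Suc k) c)) =
      (\<Sum>c\<le>Suc k. sc (fact k * of_nat (Suc k - c)) (TG (Suc k) c)
          + sc (fact k * of_nat c) (TG (Suc k) c))"
      by (intro sum.cong refl) (simp add: sc_add_left[symmetric])
    then show ?thesis by (simp only: sum.distrib)
  qed
  finally show ?case using Suc by (simp add: pow_mt_Suc)
qed

end



context alg begin

lemma DKipow: "pow (mt m) tone DKi n = tensor (fel (inverse \<kappa> ^ n)) (fel (inverse \<kappa> ^ n))"
proof (induction n)
  case 0 show ?case by (simp add: tone_def uone_def)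
next
  case (Suc n) then show ?case by (simp add: pow_mt_Suc mt_tensor Kinv_def fel_mult)
qed

lemma mt_sumtens1: assumes "finite A" "finite B"
  "\<And>a. a \<in> A \<Longrightarrow> x a \<in> Uvec \<and> y a \<in> Uvec" "\<And>b. b \<in> B \<Longrightarrow> x' b \<in> Uvec \<and> y' b \<in> Uvec"
  shows "mt m (\<Sum>a\<in>A. tensor (x a) (y a)) (\<Sum>b\<in>B. tensor (x' b) (y' b))
    = (\<Sum>a\<in>A. \<Sum>b\<in>B. tensor (m (x a) (x' b)) (m (y a) (y' b)))"
  using mt_sumtens[OF assms, where c = "\<lambda>_. 1" and d = "\<lambda>_. 1"] by simp

lemma mt_sumtens1_tens: assumes "finite A" "x' \<in> Uvec" "y' \<in> Uvec"
  "\<And>a. a \<in> A \<Longrightarrow> x a \<in> Uvec \<and> y a \<in> Uvec"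
  shows "mt m (\<Sum>a\<in>A. tensor (x a) (y a)) (tensor x' y')
    = (\<Sum>a\<in>A. tensor (m (x a) x') (m (y a) y'))"
  using mt_sumtens_tens[OF assms, where c = "\<lambda>_. 1"] by simp

lemma lab1: "a \<le> i \<Longrightarrow> \<kappa> ^ a * inverse \<kappa> ^ (i - a) * inverse \<kappa> ^ i = inverse \<kappa> ^ (2 * (i - a))"
proof -
  assume "a \<le> i"
  then obtain n where i: "i = a + n" using le_Suc_ex by blast
  have "\<kappa>^(n*2) = \<kappa>^n*\<kappa>^n" by (simp add: mult_2_right power_add)
  then show ?thesis unfolding i by (simp add: power_add field_simps mult_2 power_inverse)
qed

lemma lab2: "b \<le> j \<Longrightarrow> inverse \<kappa> ^ j * (\<kappa> ^ b * inverse \<kappa> ^ (j - b)) = inverse \<kappa> ^ (2 * (j - b))"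
  using lab1[of b j] by (simp add: mult_ac)

lemma kinv1[simp]: "\<kappa>^i * inverse \<kappa>^i = 1"
  by (simp add: field_simps)
lemma kinv2[simp]: "inverse \<kappa>^i * \<kappa>^i = 1"
  by (simp add: field_simps)

definition "DFd i = sc (inverse (qfact q i)) (mt m (pow (mt m) tone DF i) (pow (mt m) tone DKi i))"
definition "DEd j = sc (inverse (qfact q j)) (mt m (pow (mt m) tone DKi j) (pow (mt m) tone DE j))"
definition "DGd k = sc (inverse (fact k)) (pow (mt m) tone DG k)"

lemma DFd_eq: "DFd i = (\<Sum>a\<le>i. tensor (bas (a, inverse \<kappa> ^ (2 * (i - a)), 0, 0)) (bas (i - a, 1, 0, 0)))"
proof -
  have "mt m (pow (mt m) tone DF i) (pow (mt m) tone DKi i) =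
     (\<Sum>a\<le>i. sc (qfact q i) (tensor (bas (a, inverse \<kappa> ^ (2 * (i - a)), 0, 0)) (bas (i - a, 1, 0, 0))))"
    unfolding DFpow DKipow TF_def
    apply (subst mt_sumtens_tens)
       apply auto[4]
    apply (rule sum.cong[OF refl])
    apply (simp add: glue1 lab1)
    done
  then show ?thesis by (simp add: DFd_def sc_sum)
qed

lemma DEd_eq: "DEd j = (\<Sum>b\<le>j. tensor (bas (0, inverse \<kappa> ^ (2 * (j - b)), b, 0)) (bas (0, 1, j - b, 0)))"
proof -
  have "mt m (pow (mt m) tone DKi j) (pow (mt m) tone DE j) =
     (\<Sum>b\<le>j. sc (qfact q j) (tensor (bas (0, inverse \<kappa> ^ (2 * (j - b)), b, 0)) (bas (0, 1, j - b, 0))))"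
    unfolding DEpow DKipow TE_def
    apply (subst mt_tens_sumtens)
       apply auto[4]
    apply (rule sum.cong[OF refl])
    apply (simp add: glue4 lab2)
    done
  then show ?thesis by (simp add: DEd_def sc_sum)
qed

lemma DGd_eq: "DGd k = (\<Sum>c\<le>k. tensor (bas (0, 1, 0, c)) (bas (0, 1, 0, k - c)))"
  by (simp add: DGd_def DGpow sc_sum TG_def)

definition "labD i j a b \<mu> = inverse \<kappa> ^ (2 * (i - a)) * \<mu> * inverse \<kappa> ^ (2 * (j - b))"

lemma labD_nz[simp]: "\<mu> \<noteq> 0 \<Longrightarrow> labD i j a b \<mu> \<noteq> 0" by (simp add: labD_def)

lemma Delta_bas_eq: assumes "\<mu> \<noteq> 0"
  shows "Delta_bas m q \<kappa> (i, \<mu>, j, k) = (\<Sum>x\<in>({..i} \<times> {..j}) \<times> {..k}.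
     tensor (bas (fst (fst x), labD i j (fst (fst x)) (snd (fst x)) \<mu>, snd (fst x), snd x))
            (bas (i - fst (fst x), \<mu>, j - snd (fst x), k - snd x)))"
proof -
  have D: "Delta_bas m q \<kappa> (i, \<mu>, j, k) = mt m (mt m (mt m (DFd i) (tensor (fel \<mu>) (fel \<mu>))) (DEd j)) (DGd k)"
    by (simp add: Delta_bas_def Let_def DFd_def DEd_def DGd_def)
  have s1: "mt m (DFd i) (tensor (fel \<mu>) (fel \<mu>)) = (\<Sum>a\<le>i. tensor (bas (a, inverse \<kappa> ^ (2 * (i - a)) * \<mu>, 0, 0)) (bas (i - a, \<mu>, 0, 0)))"
    unfolding DFd_eq using assms
    by (subst mt_sumtens1_tens) (auto simp: glue1)
  have s2: "mt m (mt m (DFd i) (tensor (fel \<mu>) (fel \<mu>))) (DEd j) =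
     (\<Sum>p\<in>{..i} \<times> {..j}. tensor (bas (fst p, labD i j (fst p) (snd p) \<mu>, snd p, 0)) (bas (i - fst p, \<mu>, j - snd p, 0)))"
    unfolding s1 DEd_eq using assms
    by (subst mt_sumtens1) (auto simp: glue2 labD_def sum_times)
  show ?thesis
    unfolding D s2 DGd_eq using assms
    by (subst mt_sumtens1) (auto simp: glue3 sum_times)
qed

end



lemma sum_single: assumes "finite S" "\<And>x. x \<in> S \<Longrightarrow> x \<noteq> z \<Longrightarrow> f x = 0"
  shows "sum f S = (if z \<in> S then f z else 0)"
proof (cases "z \<in> S")
  case True
  then have "sum f S = f z + sum f (S - {z})" using assms(1) by (simp add: sum.remove)
  also have "sum f (S - {z}) = 0" using assms(2) by (intro sum.neutral) auto
  finally show ?thesis using True by simp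
next
  case False
  then show ?thesis using assms(2) by (simp add: sum.neutral) (metis sum.neutral)
qed

context alg begin

lemma Delta_bas_eval: assumes "\<mu> \<noteq> 0"
  shows "Delta_bas m q \<kappa> (i, \<mu>, j, k) (p, (i', \<mu>, j', k')) =
     (if i' \<le> i \<and> j' \<le> j \<and> k' \<le> k then bas (i - i', \<mu> * inverse \<kappa> ^ (2 * (i' + j')), j - j', k - k') p else 0)"
proof -
  let ?S = "({..i} \<times> {..j}) \<times> {..k}"
  let ?f = "\<lambda>x. bas (fst (fst x), labD i j (fst (fst x)) (snd (fst x)) \<mu>, snd (fst x), snd x) p *
            bas (i - fst (fst x), \<mu>, j - snd (fst x), k - snd x) (i', \<mu>, j', k')"
  let ?x0 = "((i - i', j - j'), k - k')"
  have "Delta_bas m q \<kappa> (i, \<mu>, j, k) (p, (i', \<mu>, j', k')) = sum ?f ?S"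
    using assms by (simp add: Delta_bas_eq sum_fun_apply)
  also have "\<dots> = (if ?x0 \<in> ?S then ?f ?x0 else 0)"
  proof (rule sum_single)
    fix x assume "x \<in> ?S" "x \<noteq> ?x0"
    then show "?f x = 0" by (auto simp: bas_apply)
  qed simp
  also have "\<dots> = (if i' \<le> i \<and> j' \<le> j \<and> k' \<le> k then bas (i - i', \<mu> * inverse \<kappa> ^ (2 * (i' + j')), j - j', k - k') p else 0)"
  proof (cases "i' \<le> i \<and> j' \<le> j \<and> k' \<le> k")
    case True
    then have "labD i j (i - i') (j - j') \<mu> = \<mu> * inverse \<kappa> ^ (2 * (i' + j'))"
      by (simp add: labD_def power_add mult_ac)
    then show ?thesis using True by (simp add: bas_apply)
  next
    case False
    then show ?thesis by (auto simp: bas_apply)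
  qed
  finally show ?thesis .
qed

definition shiftX :: "complex \<Rightarrow> U \<Rightarrow> nat \<Rightarrow> nat \<Rightarrow> nat \<Rightarrow> U" where
  "shiftX \<mu> X i' j' k' = (\<lambda>(a, \<nu>, b, e). if \<nu> = \<mu> * inverse \<kappa> ^ (2 * (i' + j')) then X (a + i', \<mu>, b + j', e + k') else 0)"

lemma Delta_eval: assumes "\<mu> \<noteq> 0" "X \<in> Umu \<mu>"
  shows "(\<lambda>p. Delta m q \<kappa> X (p, (i', \<mu>, j', k'))) = shiftX \<mu> X i' j' k'"
proof (rule ext, clarify)
  fix a \<nu> b e
  let ?b0 = "(a + i', \<mu>, b + j', e + k')"
  let ?lam = "\<mu> * inverse \<kappa> ^ (2 * (i' + j'))"
  have fin: "finite (supp X)" and mu: "\<And>c. c \<in> supp X \<Longrightarrow> fst (snd c) = \<mu>"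
    using assms(2) by (auto simp: Umu_def Uvec_def)
  have "Delta m q \<kappa> X ((a, \<nu>, b, e), (i', \<mu>, j', k')) = (\<Sum>c\<in>supp X. X c * Delta_bas m q \<kappa> c ((a, \<nu>, b, e), (i', \<mu>, j', k')))"
    by (simp add: Delta_def sum_fun_apply sc_apply)
  also have "\<dots> = (\<Sum>c\<in>supp X. if c = ?b0 then (if \<nu> = ?lam then X c else 0) else 0)"
  proof (rule sum.cong[OF refl])
    fix c assume c: "c \<in> supp X"
    obtain i j k where cc: "c = (i, \<mu>, j, k)" using mu[OF c] by (cases c) auto
    show "X c * Delta_bas m q \<kappa> c ((a, \<nu>, b, e), (i', \<mu>, j', k')) = (if c = ?b0 then (if \<nu> = ?lam then X c else 0) else 0)"
      unfolding cc using assms(1) by (auto simp: Delta_bas_eval bas_apply)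
  qed
  also have "\<dots> = (if \<nu> = ?lam then X ?b0 else 0)"
    using fin by (subst sum_single[where z = ?b0]) (auto simp: supp_def)
  finally show "Delta m q \<kappa> X ((a, \<nu>, b, e), (i', \<mu>, j', k')) = shiftX \<mu> X i' j' k' (a, \<nu>, b, e)"
    by (simp add: shiftX_def)
qed

lemma subspace_sum: "subspace_U S \<Longrightarrow> (\<And>a. a \<in> A \<Longrightarrow> f a \<in> S) \<Longrightarrow> (\<Sum>a\<in>A. f a) \<in> S"
  by (induction A rule: infinite_finite_induct) (auto simp: subspace_U_def)

lemma coideal_slice: assumes "right_coideal m q \<kappa> S" "X \<in> S"
  shows "(\<lambda>p. Delta m q \<kappa> X (p, r)) \<in> S"
proof -
  have sub: "subspace_U S" using assms(1) by (simp add: right_coideal_def)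
  have "Delta m q \<kappa> X \<in> lin {tensor y u | y u. y \<in> S \<and> u \<in> Uvec}"
    using assms by (simp add: right_coideal_def)
  then obtain A c where A: "finite A" "A \<subseteq> {tensor y u | y u. y \<in> S \<and> u \<in> Uvec}"
    and D: "Delta m q \<kappa> X = (\<Sum>a\<in>A. sc (c a) a)"
    unfolding lin_def by blast
  have "\<forall>a\<in>A. \<exists>yu. a = tensor (fst yu) (snd yu) \<and> fst yu \<in> S" using A(2) by force
  then obtain g where g: "\<And>a. a \<in> A \<Longrightarrow> a = tensor (fst (g a)) (snd (g a)) \<and> fst (g a) \<in> S"
    by metis
  have "(\<lambda>p. Delta m q \<kappa> X (p, r)) = (\<Sum>a\<in>A. sc (c a * snd (g a) r) (fst (g a)))"
  proof (rule ext)
    fix p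
    have "Delta m q \<kappa> X (p, r) = (\<Sum>a\<in>A. c a * a (p, r))" by (simp add: D sum_fun_apply sc_apply)
    also have "\<dots> = (\<Sum>a\<in>A. c a * snd (g a) r * fst (g a) p)"
      by (rule sum.cong[OF refl]) (subst g, assumption, simp)
    finally show "Delta m q \<kappa> X (p, r) = (\<Sum>a\<in>A. sc (c a * snd (g a) r) (fst (g a))) p"
      by (simp add: sum_fun_apply sc_apply)
  qed
  also have "\<dots> \<in> S"
    using sub g by (intro subspace_sum) (auto simp: subspace_U_def)
  finally show ?thesis .
qed

end



lemma tri_indep:
  fixes v :: "'i \<Rightarrow> ('a \<Rightarrow> complex)" and key :: "'i \<Rightarrow> nat"
  assumes fin: "finite I" and nz: "\<And>i. i \<in> I \<Longrightarrow> v i (p i) \<noteq> 0"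
    and tri: "\<And>i j. i \<in> I \<Longrightarrow> j \<in> I \<Longrightarrow> i \<noteq> j \<Longrightarrow> key i \<le> key j \<Longrightarrow> v j (p i) = 0"
  shows "inj_on v I \<and> lin_indep (v ` I)"
proof -
  have inj: "inj_on v I"
  proof (rule inj_onI)
    fix i j assume ij: "i \<in> I" "j \<in> I" "v i = v j"
    show "i = j"
    proof (rule ccontr)
      assume ne: "i \<noteq> j"
      show False
      proof (cases "key i \<le> key j")
        case True
        then have "v j (p i) = 0" using tri ij ne by blast
        then show False using nz[of i] ij by metis
      next
        case False
        then have "v i (p j) = 0" using tri[of j i] ij ne by simp
        then show False using nz[of j] ij by metis
      qed
    qed
  qed
  have li: "lin_indep (v ` I)"
    unfolding lin_indep_def
  proof (intro conjI allI impI)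
    show "finite (v ` I)" using fin by simp
    fix c :: "('a \<Rightarrow> complex) \<Rightarrow> complex"
    assume s: "(\<Sum>b\<in>v ` I. sc (c b) b) = 0"
    then have s2: "(\<Sum>i\<in>I. sc (c (v i)) (v i)) = 0" using inj by (simp add: sum.reindex)
    show "\<forall>b\<in>v ` I. c b = 0"
    proof (rule ccontr)
      assume "\<not> (\<forall>b\<in>v ` I. c b = 0)"
      then have Jne: "{i\<in>I. c (v i) \<noteq> 0} \<noteq> {}" by auto
      let ?J = "{i\<in>I. c (v i) \<noteq> 0}"
      have fJ: "finite ?J" using fin by simp
      have "Min (key ` ?J) \<in> key ` ?J" using fJ Jne by (intro Min_in) auto
      then obtain i where i: "i \<in> ?J" "key i = Min (key ` ?J)" by (metis (no_types, lifting) imageE)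
      have mn: "\<And>j. j \<in> ?J \<Longrightarrow> key i \<le> key j" using i fJ by simp
      have "0 = (\<Sum>j\<in>I. sc (c (v j)) (v j)) (p i)" using s2 by simp
      also have "\<dots> = (\<Sum>j\<in>I. c (v j) * v j (p i))" by (simp add: sum_fun_apply)
      also have "\<dots> = c (v i) * v i (p i)"
      proof (subst sum_single[where z = i])
        show "finite I" by (rule fin)
        fix j assume j: "j \<in> I" "j \<noteq> i"
        show "c (v j) * v j (p i) = 0"
        proof (cases "c (v j) = 0")
          case False
          then have "key i \<le> key j" using mn j by simp
          then show ?thesis using tri[of i j] i j by simp
        qed simp
      qed (use i in simp)
      finally show False using i nz by simp
    qed
  qed
  show ?thesis using inj li by simp
qed




context alg begin

lemma qpow_inj: assumes "w \<noteq> w2" shows "inverse \<kappa> ^ (2*w) \<noteq> inverse \<kappa> ^ (2*w2)"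
proof
  assume "inverse \<kappa> ^ (2*w) = inverse \<kappa> ^ (2*w2)"
  then have "inverse q ^ w = inverse q ^ w2" by (simp only: ik2n)
  then have e: "q ^ w = q ^ w2" by (simp add: power_inverse)
  have "\<exists>a b. a < b \<and> q ^ a = q ^ b" using assms e by (metis linorder_neqE_nat)
  then obtain a b where ab: "a < b" "q ^ a = q ^ b" by blast
  have "q ^ b = q ^ a * q ^ (b - a)" using ab(1) by (simp flip: power_add)
  then have "q ^ a * q ^ (b - a) = q ^ a * 1" using ab(2) by simp
  then have "q ^ (b - a) = 1" using q_nz by simp
  then show False using q_pow_ne1[of "b - a"] ab by simp
qed

lemma main:
  assumes co: "right_coideal m q \<kappa> S" and mu0: "\<mu> \<noteq> 0" and XS: "X \<in> S" and XU: "X \<in> Umu \<mu>" and X0: "X \<noteq> 0"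
  shows "dim_ge S (\<Sum>t=0..d4 X. s13 X t + 1)"
proof -
  define N where "N = d4 X"
  have fin: "finite (supp X)" using XU by (simp add: Umu_def Uvec_def)
  have mu: "\<And>i \<nu> j k. X (i, \<nu>, j, k) \<noteq> 0 \<Longrightarrow> \<nu> = \<mu>"
    using XU by (force simp: Umu_def supp_def)
  let ?g4 = "\<lambda>b::idx. snd (snd (snd b))"
  have sne: "supp X \<noteq> {}" using X0 by (auto simp: supp_def fun_eq_iff)
  have Nge: "\<And>i \<nu> j k. X (i, \<nu>, j, k) \<noteq> 0 \<Longrightarrow> k \<le> N"
  proof -
    fix i \<nu> j k assume "X (i, \<nu>, j, k) \<noteq> 0"
    then have "(i, \<nu>, j, k) \<in> supp X" by (simp add: supp_def)
    then show "k \<le> N" unfolding N_def d4_def using fin by (force intro: Max_ge)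
  qed
  obtain iN \<nu>N jN where XN: "X (iN, \<nu>N, jN, N) \<noteq> 0"
  proof -
    have "N \<in> ?g4 ` supp X" unfolding N_def d4_def using fin sne by (intro Max_in) auto
    then show ?thesis using that by (auto simp: supp_def)
  qed
  have xc_apply: "\<And>k i \<nu> j. Xcoef X k (i, \<nu>, j, 0) = X (i, \<nu>, j, k)" by (simp add: Xcoef_def)
  have xc_supp: "\<And>k. supp (Xcoef X k) \<subseteq> (\<lambda>b. (fst b, fst (snd b), fst (snd (snd b)), 0)) ` supp X"
  proof
    fix k b assume "b \<in> supp (Xcoef X k)"
    then obtain i \<nu> j kk where b: "b = (i, \<nu>, j, kk)" "Xcoef X k (i, \<nu>, j, kk) \<noteq> 0"
      by (cases b) (auto simp: supp_def)
    then have "kk = 0" "X (i, \<nu>, j, k) \<noteq> 0" by (auto simp: Xcoef_def split: if_splits)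
    then show "b \<in> (\<lambda>b. (fst b, fst (snd b), fst (snd (snd b)), 0)) ` supp X"
      using b by (force simp: supp_def)
  qed
  have xc_fin: "\<And>k. finite (supp (Xcoef X k))" using finite_subset[OF xc_supp] fin by blast
  have xc_nz: "\<And>k. Xcoef X k \<noteq> 0 \<longleftrightarrow> (\<exists>i \<nu> j. X (i, \<nu>, j, k) \<noteq> 0)"
  proof -
    fix k show "Xcoef X k \<noteq> 0 \<longleftrightarrow> (\<exists>i \<nu> j. X (i, \<nu>, j, k) \<noteq> 0)"
    proof
      assume "Xcoef X k \<noteq> 0"
      then obtain b where "Xcoef X k b \<noteq> 0" by (auto simp: fun_eq_iff)
      then show "\<exists>i \<nu> j. X (i, \<nu>, j, k) \<noteq> 0" by (cases b) (auto simp: Xcoef_def split: if_splits)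
    next
      assume "\<exists>i \<nu> j. X (i, \<nu>, j, k) \<noteq> 0"
      then obtain i \<nu> j where "X (i, \<nu>, j, k) \<noteq> 0" by blast
      then have "Xcoef X k (i, \<nu>, j, 0) \<noteq> 0" by (simp add: xc_apply)
      then show "Xcoef X k \<noteq> 0" by auto
    qed
  qed
  have fa: "\<And>i \<nu> j k. X (i, \<nu>, j, k) \<noteq> 0 \<Longrightarrow> i + j \<le> d13 (Xcoef X k)"
  proof -
    fix i \<nu> j k assume "X (i, \<nu>, j, k) \<noteq> 0"
    then have "(i, \<nu>, j, 0) \<in> supp (Xcoef X k)" by (simp add: supp_def xc_apply)
    then show "i + j \<le> d13 (Xcoef X k)" unfolding d13_def using xc_fin by (force intro: Max_ge)
  qed
  have fb: "\<And>k. Xcoef X k \<noteq> 0 \<Longrightarrow> \<exists>i j. X (i, \<mu>, j, k) \<noteq> 0 \<and> i + j = d13 (Xcoef X k)"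
  proof -
    fix k assume "Xcoef X k \<noteq> 0"
    then have ne: "supp (Xcoef X k) \<noteq> {}" by (auto simp: supp_def fun_eq_iff)
    have "d13 (Xcoef X k) \<in> (\<lambda>b. fst b + fst (snd (snd b))) ` supp (Xcoef X k)"
      unfolding d13_def using xc_fin ne by (intro Max_in) auto
    then obtain i \<nu> j kk where b: "(i, \<nu>, j, kk) \<in> supp (Xcoef X k)" "d13 (Xcoef X k) = i + j"
      by force
    then have "X (i, \<nu>, j, k) \<noteq> 0" by (auto simp: supp_def Xcoef_def split: if_splits)
    moreover have "\<nu> = \<mu>" using mu calculation by blast
    ultimately show "\<exists>i j. X (i, \<mu>, j, k) \<noteq> 0 \<and> i + j = d13 (Xcoef X k)" using b(2) by auto
  qed
  let ?Ms = "\<lambda>t. {d13 (Xcoef X m') | m'. m' \<ge> t \<and> Xcoef X m' \<noteq> 0}"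
  have kset: "{k. Xcoef X k \<noteq> 0} \<subseteq> {..N}" using xc_nz Nge by auto
  have Ms_fin: "\<And>t. finite (?Ms t)"
  proof -
    fix t
    have "?Ms t \<subseteq> (\<lambda>m'. d13 (Xcoef X m')) ` {..N}" using kset by auto
    then show "finite (?Ms t)" by (rule finite_subset) simp
  qed
  have Ms_ne: "\<And>t. t \<le> N \<Longrightarrow> ?Ms t \<noteq> {}"
  proof -
    fix t assume "t \<le> N"
    moreover have "Xcoef X N \<noteq> 0" using xc_nz XN by blast
    ultimately show "?Ms t \<noteq> {}" by blast
  qed
  have fc: "\<And>t k. t \<le> k \<Longrightarrow> Xcoef X k \<noteq> 0 \<Longrightarrow> d13 (Xcoef X k) \<le> s13 X t"
    unfolding s13_def using Ms_fin by (force intro: Max_ge)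
  have fd: "\<And>t. t \<le> N \<Longrightarrow> \<exists>m'\<ge>t. Xcoef X m' \<noteq> 0 \<and> d13 (Xcoef X m') = s13 X t"
  proof -
    fix t assume "t \<le> N"
    then have "s13 X t \<in> ?Ms t" unfolding s13_def using Ms_fin Ms_ne by (intro Max_in) auto
    then show "\<exists>m'\<ge>t. Xcoef X m' \<noteq> 0 \<and> d13 (Xcoef X m') = s13 X t" by auto
  qed
  define Mt where "Mt t = {m'. t \<le> m' \<and> Xcoef X m' \<noteq> 0 \<and> d13 (Xcoef X m') = s13 X t}" for t
  define ms where "ms t = Max (Mt t)" for t
  have Mt_fin: "\<And>t. finite (Mt t)"
  proof -
    fix t have "Mt t \<subseteq> {..N}" using kset by (auto simp: Mt_def)
    then show "finite (Mt t)" by (rule finite_subset) simp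
  qed
  have ms_in: "\<And>t. t \<le> N \<Longrightarrow> ms t \<in> Mt t"
    unfolding ms_def using Mt_fin fd by (intro Max_in) (auto simp: Mt_def)
  have ms_max: "\<And>t k. k \<in> Mt t \<Longrightarrow> k \<le> ms t"
    unfolding ms_def using Mt_fin by (intro Max_ge) auto
  have "\<forall>t. \<exists>ij. t \<le> N \<longrightarrow> X (fst ij, \<mu>, snd ij, ms t) \<noteq> 0 \<and> fst ij + snd ij = s13 X t"
  proof
    fix t show "\<exists>ij. t \<le> N \<longrightarrow> X (fst ij, \<mu>, snd ij, ms t) \<noteq> 0 \<and> fst ij + snd ij = s13 X t"
    proof (cases "t \<le> N")
      case True
      then have "Xcoef X (ms t) \<noteq> 0" "d13 (Xcoef X (ms t)) = s13 X t" using ms_in by (auto simp: Mt_def)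
      then show ?thesis using fb by fastforce
    qed simp
  qed
  then have "\<exists>ij. \<forall>t. t \<le> N \<longrightarrow> X (fst (ij t), \<mu>, snd (ij t), ms t) \<noteq> 0 \<and> fst (ij t) + snd (ij t) = s13 X t"
    by (rule choice)
  then obtain ij where ij: "\<And>t. t \<le> N \<Longrightarrow> X (fst (ij t), \<mu>, snd (ij t), ms t) \<noteq> 0 \<and> fst (ij t) + snd (ij t) = s13 X t"
    by blast
  define i0 where "i0 t = fst (ij t)" for t
  define j0 where "j0 t = snd (ij t)" for t
  define ip where "ip t w = min w (i0 t)" for t w
  define jp where "jp t w = w - ip t w" for t w
  define I where "I = (SIGMA t:{0..N}. {0..s13 X t})"
  define v where "v x = shiftX \<mu> X (ip (fst x) (snd x)) (jp (fst x) (snd x)) (fst x)" for x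
  define pt where "pt x = (i0 (fst x) - ip (fst x) (snd x), \<mu> * inverse \<kappa> ^ (2 * snd x),
                          j0 (fst x) - jp (fst x) (snd x), ms (fst x) - fst x)" for x
  have ipj: "\<And>t w. t \<le> N \<Longrightarrow> w \<le> s13 X t \<Longrightarrow> ip t w \<le> i0 t \<and> jp t w \<le> j0 t \<and> ip t w + jp t w = w"
    using ij unfolding ip_def jp_def i0_def j0_def by fastforce
  have vS: "\<And>x. v x \<in> S"
    unfolding v_def by (subst Delta_eval[OF mu0 XU, symmetric]) (rule coideal_slice[OF co XS])
  have ms_ge: "\<And>t. t \<le> N \<Longrightarrow> t \<le> ms t" using ms_in by (auto simp: Mt_def)
  have nz: "\<And>x. x \<in> I \<Longrightarrow> v x (pt x) \<noteq> 0"
  proof -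
    fix x assume x: "x \<in> I"
    obtain t w where tw: "x = (t, w)" "t \<le> N" "w \<le> s13 X t" using x by (auto simp: I_def)
    have "v x (pt x) = X (i0 t, \<mu>, j0 t, ms t)"
      using ipj[OF tw(2,3)] ms_ge[OF tw(2)] unfolding tw v_def pt_def shiftX_def by simp
    then show "v x (pt x) \<noteq> 0" using ij[OF tw(2)] by (simp add: i0_def j0_def)
  qed
  have tri: "\<And>x y. x \<in> I \<Longrightarrow> y \<in> I \<Longrightarrow> x \<noteq> y \<Longrightarrow> fst x \<le> fst y \<Longrightarrow> v y (pt x) = 0"
  proof -
    fix x y assume x: "x \<in> I" and y: "y \<in> I" and xy: "x \<noteq> y" and le: "fst x \<le> fst y"
    obtain t w where tw: "x = (t, w)" "t \<le> N" "w \<le> s13 X t" using x by (auto simp: I_def)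
    obtain t2 w2 where tw2: "y = (t2, w2)" "t2 \<le> N" "w2 \<le> s13 X t2" using y by (auto simp: I_def)
    show "v y (pt x) = 0"
    proof (cases "w = w2")
      case False
      then show ?thesis unfolding tw tw2 v_def pt_def shiftX_def using qpow_inj[OF False] mu0 ipj[OF tw2(2,3)] by auto
    next
      case True
      then have tt: "t < t2" using xy le tw tw2 by auto
      let ?A = "i0 t - ip t w + ip t2 w2" and ?B = "j0 t - jp t w + jp t2 w2" and ?k = "ms t - t + t2"
      have vy: "v y (pt x) = X (?A, \<mu>, ?B, ?k)"
        unfolding tw tw2 v_def pt_def shiftX_def using True ipj[OF tw2(2,3)] by simp
      have AB: "?A + ?B = s13 X t"
        using ipj[OF tw(2,3)] ipj[OF tw2(2,3)] ij[OF tw(2)] True unfolding i0_def j0_def by simp arith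
      show ?thesis
      proof (rule ccontr)
        assume "v y (pt x) \<noteq> 0"
        then have X1: "X (?A, \<mu>, ?B, ?k) \<noteq> 0" using vy by simp
        have tk: "t \<le> ?k" using ms_ge[OF tw(2)] tt by arith
        have c0: "Xcoef X ?k \<noteq> 0" using xc_nz X1 by blast
        have "s13 X t \<le> d13 (Xcoef X ?k)" using fa[OF X1] AB by simp
        moreover have "d13 (Xcoef X ?k) \<le> s13 X t" using fc[OF tk c0] .
        ultimately have "?k \<in> Mt t" unfolding Mt_def using tk c0 by simp
        then have "?k \<le> ms t" by (rule ms_max)
        then show False using tt ms_ge[OF tw(2)] by simp
      qed
    qed
  qed
  have finI: "finite I" unfolding I_def by simp
  have res: "inj_on v I \<and> lin_indep (v ` I)"
    by (rule tri_indep[where key = fst and p = pt]) (use finI nz tri in auto)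
  have "card (v ` I) = card I" using res by (simp add: card_image)
  also have "card I = (\<Sum>t=0..N. s13 X t + 1)" unfolding I_def by (simp add: card_SigmaI)
  finally show ?thesis unfolding dim_ge_def N_def using res vS by blast
qed

end


theorem mainTheorem4:
  fixes q \<kappa> :: complex and m :: "U \<Rightarrow> U \<Rightarrow> U" and \<X> :: "U set"
    and \<mu> :: complex and X :: U
  assumes "\<not> algebraic q"
    and "\<kappa>\<^sup>2 = q"
    and "U_algebra q \<kappa> m"
    and "right_coideal m q \<kappa> \<X>"
    and "\<mu> \<noteq> 0"
    and "X \<in> \<X>" and "X \<in> Umu \<mu>" and "X \<noteq> 0"
  shows "dim_ge \<X> (\<Sum>t=0..d4 X. s13 X t + 1)"
proof -
  interpret alg q \<kappa> m by unfold_locales (use assms in auto)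
  show ?thesis using main assms(4-8) by blast
qed

end
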